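(* Let $\mathcal D$ be a positively oriented Descartes configuration and let $\mathbb D(\mathcal P)$ be the set of all ordered, oriented Descartes configurations whose underlying unordered, unoriented configuration is the underlying configuration of some member of $\mathcal F(\mathcal D)$. Then $\mathbb D(\mathcal P)$ is invariant under the Apollonian group $\mathcal A$ acting by $\mathbf W_{\mathcal D'}\mapsto\mathbf U\mathbf W_{\mathcal D'}$, and it is the union of exactly $48$ orbits of $\mathcal A$; each of these orbits contains exactly one ordered, oriented representative of each unordered, unoriented Descartes configuration underlying a member of $\mathcal F(\mathcal D)$.
   Context: Oriented circles/lines, oriented curvature ($\pm1/r$, $+$ iff interior is the bounded disk; lines curvature $0$, interior the half-plane the unit normal points into). A Descartes configuration: four mutually tangent circles/lines with six distinct tangency points; oriented if interiors pairwise disjoint or so after reversing all orientations; positively oriented if interiors pairwise disjoint. Replacement: in an oriented Descartes configuration, a circle $C_i$ may be replaced by the unique other circle tangent to the remaining three at new points, oriented so the result is an oriented Descartes configuration; $\mathcal F(\mathcal D)$ is the set of configurations obtained from $\mathcal D$ by finitely many replacements. Augmented curvature-center coordinates: for center $\mathbf c$, oriented radius $r$: $\mathbf w(C)=((|\mathbf c|^2-r^2)/r,1/r,c_1/r,c_2/r)$; for the line $\mathbf x\cdot\mathbf h=m$ with interior-pointing unit normal $\mathbf h$: $(2m,0,h_1,h_2)$. $\mathbf W_{\mathcal D}$ has rows $\mathbf w(C_k)$. Known fact: $\mathcal D\mapsto\mathbf W_{\mathcal D}$ is a bijection from ordered, oriented Descartes configurations onto $\{\mathbf W:\mathbf W^T\mathbf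 Q_D\mathbf W=\mathbf Q_W\}$, with $\mathbf Q_D=\mathbf I-\frac12\mathbf 1\mathbf 1^T$, $\mathbf Q_W=\begin{pmatrix}0&-4&0&0\\-4&0&0&0\\0&0&2&0\\0&0&0&2\end{pmatrix}$; so any $\mathbf U$ with $\mathbf U^T\mathbf Q_D\mathbf U=\mathbf Q_D$ acts on ordered, oriented Descartes configurations. The Apollonian group is $\mathcal A=\langle\mathbf S_1,\mathbf S_2,\mathbf S_3,\mathbf S_4\rangle$, where $\mathbf S_i$ agrees with the $4\times4$ identity except in row $i$, which has $-1$ in position $i$ and $2$ in the other three positions (e.g. $\mathbf S_1$ has first row $(-1,2,2,2)$). *)

theory Defs
  imports "HOL-Analysis.Analysis"
begin

text \<open>OCirc c r : circle with centre c and oriented (signed) radius r; r > 0 iff the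
              interior is the bounded open disk.
  OLine h m : the line {x. h . x = m} with unit normal h pointing into the interior.\<close>

datatype ocircle = OCirc "real^2" real | OLine "real^2" real

fun valid_oc :: "ocircle \<Rightarrow> bool" where
  "valid_oc (OCirc c r) \<longleftrightarrow> r \<noteq> 0"
| "valid_oc (OLine h m) \<longleftrightarrow> norm h = 1"

fun is_line :: "ocircle \<Rightarrow> bool" where
  "is_line (OCirc c r) = False"
| "is_line (OLine h m) = True"

fun supp :: "ocircle \<Rightarrow> (real^2) set" where
  "supp (OCirc c r) = sphere c \<bar>r\<bar>"
| "supp (OLine h m) = {x. h \<bullet> x = m}"

fun oint :: "ocircle \<Rightarrow> (real^2) set" where
  "oint (OCirc c r) = (if r > 0 then ball c r else - cball c (- r))"
| "oint (OLine h m) = {x. h \<bullet> x > m}"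

fun orev :: "ocircle \<Rightarrow> ocircle" where
  "orev (OCirc c r) = OCirc c (- r)"
| "orev (OLine h m) = OLine (- h) (- m)"

text \<open>Tangency with tangency point in the extended plane (None = point at infinity):
  two lines are tangent (at infinity) iff they are distinct and parallel, i.e. disjoint;
  otherwise two circles/lines are tangent iff they meet in exactly one point.\<close>
definition tangent_at :: "ocircle \<Rightarrow> ocircle \<Rightarrow> (real^2) option \<Rightarrow> bool" where
  "tangent_at C C' p \<longleftrightarrow>
     (is_line C \<and> is_line C' \<and> supp C \<inter> supp C' = {} \<and> p = None) \<or>
     (\<not> (is_line C \<and> is_line C') \<and> (\<exists>q. supp C \<inter> supp C' = {q} \<and> p = Some q))"

type_synonym config = "4 \<Rightarrow> ocircle"

definition descartes :: "config \<Rightarrow> bool" where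
  "descartes D \<longleftrightarrow> (\<forall>k. valid_oc (D k)) \<and>
     (\<exists>P :: 4 \<Rightarrow> 4 \<Rightarrow> (real^2) option.
        (\<forall>i j. i \<noteq> j \<longrightarrow> tangent_at (D i) (D j) (P i j)) \<and>
        (\<forall>i j k l. i \<noteq> j \<longrightarrow> k \<noteq> l \<longrightarrow> P i j = P k l \<longrightarrow> {i, j} = {k, l}))"

definition pairwise_disjoint_interiors :: "config \<Rightarrow> bool" where
  "pairwise_disjoint_interiors D \<longleftrightarrow> (\<forall>i j. i \<noteq> j \<longrightarrow> oint (D i) \<inter> oint (D j) = {})"

definition oriented_descartes :: "config \<Rightarrow> bool" where
  "oriented_descartes D \<longleftrightarrow> descartes D \<and>
     (pairwise_disjoint_interiors D \<or> pairwise_disjoint_interiors (orev \<circ> D))"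

definition positively_oriented :: "config \<Rightarrow> bool" where
  "positively_oriented D \<longleftrightarrow> descartes D \<and> pairwise_disjoint_interiors D"

definition underlying :: "config \<Rightarrow> (real^2) set set" where
  "underlying D = supp ` range D"

definition replaces :: "4 \<Rightarrow> config \<Rightarrow> config \<Rightarrow> bool" where
  "replaces i D D' \<longleftrightarrow> oriented_descartes D \<and> oriented_descartes D' \<and>
     (\<forall>j. j \<noteq> i \<longrightarrow> D' j = D j) \<and> supp (D' i) \<noteq> supp (D i) \<and>
     (\<forall>j p q. j \<noteq> i \<longrightarrow> tangent_at (D i) (D j) p \<longrightarrow> tangent_at (D' i) (D j) q \<longrightarrow> p \<noteq> q)"

definition replacement_step :: "config \<Rightarrow> config \<Rightarrow> bool" where
  "replacement_step D D' \<longleftrightarrow> (\<exists>i. replaces i D D')"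

definition F_orbit :: "config \<Rightarrow> config set" where
  "F_orbit D = {D'. replacement_step\<^sup>*\<^sup>* D D'}"

text \<open>Augmented curvature-center coordinates; index 1,2,3,4 (= 0 in type 4).\<close>
definition vec4 :: "real \<Rightarrow> real \<Rightarrow> real \<Rightarrow> real \<Rightarrow> real^4" where
  "vec4 a b c d = (\<chi> i. if i = 1 then a else if i = 2 then b else if i = 3 then c else d)"

fun wcoord :: "ocircle \<Rightarrow> real^4" where
  "wcoord (OCirc c r) = vec4 ((norm c ^ 2 - r ^ 2) / r) (1 / r) (c $ 1 / r) (c $ 2 / r)"
| "wcoord (OLine h m) = vec4 (2 * m) 0 (h $ 1) (h $ 2)"

definition Wmat :: "config \<Rightarrow> real^4^4" where
  "Wmat D = (\<chi> k. wcoord (D k))"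

definition Smat :: "4 \<Rightarrow> real^4^4" where
  "Smat i = (\<chi> r c. if r = i then (if c = i then -1 else 2) else (if r = c then 1 else 0))"

inductive_set apollonian_group :: "(real^4^4) set" where
  one: "mat 1 \<in> apollonian_group"
| gen: "Smat i \<in> apollonian_group"
| mult: "U \<in> apollonian_group \<Longrightarrow> V \<in> apollonian_group \<Longrightarrow> U ** V \<in> apollonian_group"
| inv: "U \<in> apollonian_group \<Longrightarrow> matrix_inv U \<in> apollonian_group"

definition DD :: "config \<Rightarrow> config set" where
  "DD D = {D'. oriented_descartes D' \<and> (\<exists>D'' \<in> F_orbit D. underlying D' = underlying D'')}"

definition A_orbit :: "config \<Rightarrow> config set" where
  "A_orbit D1 = {D2. oriented_descartes D2 \<and> (\<exists>U \<in> apollonian_group. Wmat D2 = U ** Wmat D1)}"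

end

theory Submission
  imports Defs "HOL-Combinatorics.Permutations"
begin

lemma v4 [simp]: "vec4 a b c d $ 1 = a" "vec4 a b c d $ 2 = b" "vec4 a b c d $ 3 = c" "vec4 a b c d $ 4 = d"
  by (simp_all add: vec4_def)

lemma vec4_eq: "(x::real^4) = vec4 (x$1) (x$2) (x$3) (x$4)"
  by (simp add: vec_eq_iff forall_4)

definition Bf :: "real^4 \<Rightarrow> real^4 \<Rightarrow> real" where
  "Bf x y = -(x$1*y$2 + x$2*y$1)/4 + (x$3*y$3 + x$4*y$4)/2"

definition qd :: "4 \<Rightarrow> 4 \<Rightarrow> real" where "qd j k = (if j = k then 1/2 else -1/2)"

definition gram :: "real^4^4 \<Rightarrow> bool" where
  "gram W \<longleftrightarrow> (\<forall>j k. Bf (W$j) (W$k) = qd j k)"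

lemma Bf_sym: "Bf x y = Bf y x" by (simp add: Bf_def field_simps)
lemma Bf_add_left: "Bf (x + y) z = Bf x z + Bf y z" by (simp add: Bf_def field_simps)
lemma Bf_scale_left: "Bf (c *\<^sub>R x) z = (c::real) * Bf x z" by (simp add: Bf_def field_simps)
lemma Bf_zero_left[simp]: "Bf 0 z = 0" by (simp add: Bf_def)
lemma Bf_neg_left: "Bf (- x) z = - Bf x z" by (simp add: Bf_def field_simps)
lemma Bf_diff_left: "Bf (x - y) z = Bf x z - Bf y z" by (simp add: Bf_def field_simps)
lemma Bf_add_right: "Bf z (x + y) = Bf z x + Bf z y" by (simp add: Bf_def field_simps)
lemma Bf_scale_right: "Bf z (c *\<^sub>R x) = (c::real) * Bf z x" by (simp add: Bf_def field_simps)
lemma Bf_zero_right[simp]: "Bf z 0 = 0" by (simp add: Bf_def)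
lemma Bf_neg_right: "Bf z (- x) = - Bf z x" by (simp add: Bf_def field_simps)
lemma Bf_diff_right: "Bf z (x - y) = Bf z x - Bf z y" by (simp add: Bf_def field_simps)
lemma Bf_sum_left: "Bf (sum f S) z = (\<Sum>k\<in>S. Bf (f k) z)"
  by (induction S rule: infinite_finite_induct) (simp_all add: Bf_add_left)
lemma Bf_sum_right: "Bf z (sum f S) = (\<Sum>k\<in>S. Bf z (f k))"
  by (induction S rule: infinite_finite_induct) (simp_all add: Bf_add_right)

definition Qb :: "real^4^4" where
  "Qb = (\<chi> r c. if (r = 1 \<and> c = 2) \<or> (r = 2 \<and> c = 1) then -1/4
                 else if (r = 3 \<and> c = 3) \<or> (r = 4 \<and> c = 4) then 1/2 else 0)"

lemma Qb_mv: "Qb *v y = vec4 (-y$2/4) (-y$1/4) (y$3/2) (y$4/2)"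
  by (simp add: vec_eq_iff forall_4 matrix_vector_mult_def sum_4 Qb_def)

lemma Bf_Qb: "Bf x y = x \<bullet> (Qb *v y)"
  by (simp add: inner_vec_def sum_4 Qb_mv Bf_def field_simps)

definition QD :: "real^4^4" where "QD = (\<chi> j k. qd j k)"

lemma QD_sq: "QD ** QD = mat 1"
  by (simp add: vec_eq_iff forall_4 matrix_matrix_mult_def sum_4 QD_def qd_def mat_def)

lemma gram_mat: assumes "gram W" shows "W ** (Qb ** transpose W) = QD"
proof -
  have "(W ** (Qb ** transpose W))$j$k = Bf (W$j) (W$k)" for j k
    by (simp add: matrix_matrix_mult_def Bf_Qb inner_vec_def matrix_vector_mult_def transpose_def mult.commute)
  then show ?thesis using assms by (simp add: vec_eq_iff gram_def QD_def)
qed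

lemma gram_linv: assumes "gram W" shows "\<exists>L. L ** W = mat 1"
proof -
  have "W ** ((Qb ** transpose W) ** QD) = mat 1"
    using gram_mat[OF assms] QD_sq by (metis matrix_mul_assoc)
  then show ?thesis using matrix_left_right_inverse by blast
qed

lemma mv_row: "(W *v u) $ j = W$j \<bullet> u"
  by (simp add: matrix_vector_mult_def inner_vec_def mult.commute)

lemma gram_nondeg: assumes "gram W" "\<And>j. Bf (W$j) z = 0" shows "z = 0"
proof -
  obtain L where L: "L ** W = mat 1" using gram_linv[OF assms(1)] by blast
  have "W *v (Qb *v z) = 0" using assms(2) by (simp add: vec_eq_iff mv_row Bf_Qb)
  then have "Qb *v z = 0"
    by (metis L matrix_vector_mul_assoc matrix_vector_mul_lid matrix_vector_mult_0_right)
  then show ?thesis by (simp add: Qb_mv vec_eq_iff forall_4)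
qed

definition gv :: "real^4^4 \<Rightarrow> real^4 \<Rightarrow> 4 \<Rightarrow> real" where "gv W y j = Bf (W$j) y"
definition gs :: "real^4^4 \<Rightarrow> real^4 \<Rightarrow> real" where "gs W y = (\<Sum>j\<in>UNIV. gv W y j)"

lemma gram_app: "gram W \<Longrightarrow> Bf (W$j) (W$k) = qd j k" by (simp add: gram_def)

lemma sum_qd: "(\<Sum>k\<in>UNIV. a k * qd j k) = a j - (1/2) * (\<Sum>k\<in>UNIV. a k)"
  using exhaust_4[of j] by (auto simp: sum_4 qd_def algebra_simps)

lemma Bf_comb: assumes "gram W"
  shows "Bf (W$j) (\<Sum>k\<in>UNIV. a k *\<^sub>R W$k) = a j - (1/2) * (\<Sum>k\<in>UNIV. a k)"
proof -
  have "Bf (W$j) (\<Sum>k\<in>UNIV. a k *\<^sub>R W$k) = (\<Sum>k\<in>UNIV. a k * qd j k)"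
    by (simp add: Bf_sum_right Bf_scale_right gram_app[OF assms] mult.commute)
  then show ?thesis by (simp add: sum_qd)
qed

lemma coord: assumes "gram W"
  shows "y = (\<Sum>k\<in>UNIV. (gv W y k - (1/2) * gs W y) *\<^sub>R W$k)"
proof -
  let ?a = "\<lambda>k. gv W y k - (1/2) * gs W y"
  have s: "(\<Sum>k\<in>UNIV. ?a k) = - gs W y"
    by (simp add: gs_def sum_subtractf)
  have "Bf (W$j) (y - (\<Sum>k\<in>UNIV. ?a k *\<^sub>R W$k)) = Bf (W$j) y - (?a j - (1/2) * (\<Sum>k\<in>UNIV. ?a k))" for j
    by (simp only: Bf_diff_right Bf_comb[OF assms])
  then have "Bf (W$j) (y - (\<Sum>k\<in>UNIV. ?a k *\<^sub>R W$k)) = 0" for j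
    unfolding s by (simp add: gv_def)
  then have "y - (\<Sum>k\<in>UNIV. ?a k *\<^sub>R W$k) = 0" by (rule gram_nondeg[OF assms])
  then show ?thesis by simp
qed

lemma Bf_coord: assumes "gram W"
  shows "Bf y z = (\<Sum>k\<in>UNIV. gv W y k * gv W z k) - (1/2) * gs W y * gs W z"
proof -
  have "Bf y z = Bf (\<Sum>k\<in>UNIV. (gv W y k - (1/2) * gs W y) *\<^sub>R W$k) z"
    using coord[OF assms, of y] by simp
  also have "\<dots> = (\<Sum>k\<in>UNIV. (gv W y k - (1/2) * gs W y) * gv W z k)"
    by (simp add: Bf_sum_left Bf_scale_left gv_def)
  finally show ?thesis by (simp add: sum_4 gs_def algebra_simps)
qed

lemma indep: assumes "gram W" "(\<Sum>k\<in>UNIV. c k *\<^sub>R W$k) = 0" shows "c k = 0"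
proof -
  have "c j - (1/2) * (\<Sum>k\<in>UNIV. c k) = 0" for j
    using Bf_comb[OF assms(1), of j c] assms(2) by simp
  then show ?thesis using forall_4 by (simp add: sum_4) (smt (verit))
qed


definition pvec :: "real^2 \<Rightarrow> real^4" where "pvec x = vec4 (x$1^2 + x$2^2) 1 (x$1) (x$2)"
definition eps :: "real^4" where "eps = vec4 1 0 0 0"

lemma norm2: "(norm (x::real^2))^2 = x$1^2 + x$2^2"
  unfolding power2_norm_eq_inner by (simp add: inner_vec_def sum_2 power2_eq_square)

lemma dist2: "(dist (c::real^2) x)^2 = (x$1 - c$1)^2 + (x$2 - c$2)^2"
  by (simp add: dist_norm norm2 power2_commute)

lemma inner2: "(h::real^2) \<bullet> x = h$1 * x$1 + h$2 * x$2"
  by (simp add: inner_vec_def sum_2)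

lemma wcoord_circ: "wcoord (OCirc c r) = vec4 ((c$1^2 + c$2^2 - r^2) / r) (1 / r) (c $ 1 / r) (c $ 2 / r)"
  by (simp add: norm2)

lemma B_circ_p: "r \<noteq> 0 \<Longrightarrow> Bf (wcoord (OCirc c r)) (pvec x) = (r^2 - ((x$1 - c$1)^2 + (x$2 - c$2)^2)) / (4*r)"
  unfolding wcoord_circ by (simp add: Bf_def pvec_def field_simps power2_eq_square)

lemma B_line_p: "Bf (wcoord (OLine h m)) (pvec x) = (h$1*x$1 + h$2*x$2 - m)/2"
  by (simp add: Bf_def pvec_def field_simps)

lemma valid_B: "valid_oc C \<Longrightarrow> Bf (wcoord C) (wcoord C) = 1/2"
proof (cases C)
  case (OCirc c r)
  assume "valid_oc C"
  then have "r \<noteq> 0" using OCirc by simp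
  then show ?thesis unfolding OCirc wcoord_circ by (simp add: Bf_def field_simps power2_eq_square)
next
  case (OLine h m)
  assume "valid_oc C"
  then have "norm h = 1" using OLine by simp
  then have "h$1^2 + h$2^2 = 1" using norm2[of h] by simp
  then show ?thesis unfolding OLine by (simp add: Bf_def field_simps power2_eq_square)
qed

lemma sq_lt: "0 \<le> (a::real) \<Longrightarrow> 0 \<le> b \<Longrightarrow> (a < b) = (a^2 < b^2)"
  using power_less_imp_less_base[of a 2 b] power_strict_mono[of a b 2] by auto

lemma supp_B: "valid_oc C \<Longrightarrow> x \<in> supp C \<longleftrightarrow> Bf (wcoord C) (pvec x) = 0"
proof (cases C)
  case (OCirc c r)
  assume "valid_oc C"
  then have r: "r \<noteq> 0" using OCirc by simp
  have "x \<in> supp C \<longleftrightarrow> dist c x = \<bar>r\<bar>" using OCirc by simp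
  also have "\<dots> \<longleftrightarrow> (dist c x)^2 = r^2"
    using power2_eq_iff_nonneg[of "dist c x" "\<bar>r\<bar>"] by simp
  also have "\<dots> \<longleftrightarrow> Bf (wcoord C) (pvec x) = 0"
    unfolding OCirc B_circ_p[OF r] dist2 using r by auto
  finally show ?thesis .
next
  case (OLine h m)
  then show ?thesis by (auto simp: Bf_def pvec_def inner2 field_simps)
qed

lemma oint_B: "valid_oc C \<Longrightarrow> x \<in> oint C \<longleftrightarrow> Bf (wcoord C) (pvec x) > 0"
proof (cases C)
  case (OCirc c r)
  assume "valid_oc C"
  then have r: "r \<noteq> 0" using OCirc by simp
  show ?thesis
  proof (cases "r > 0")
    case True
    have "x \<in> oint C \<longleftrightarrow> dist c x < r" using OCirc True by simp
    also have "\<dots> \<longleftrightarrow> (dist c x)^2 < r^2" using sq_lt[of "dist c x" r] True by simp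
    also have "\<dots> \<longleftrightarrow> Bf (wcoord C) (pvec x) > 0"
      unfolding OCirc B_circ_p[OF r] dist2 using True by (simp add: zero_less_divide_iff)
    finally show ?thesis .
  next
    case False
    then have rn: "r < 0" using r by simp
    have "x \<in> oint C \<longleftrightarrow> - r < dist c x" using OCirc rn by (simp add: not_le)
    also have "\<dots> \<longleftrightarrow> (- r)^2 < (dist c x)^2" using sq_lt[of "-r" "dist c x"] rn by simp
    also have "\<dots> \<longleftrightarrow> Bf (wcoord C) (pvec x) > 0"
      unfolding OCirc B_circ_p[OF r] dist2 using rn by (simp add: zero_less_divide_iff)
    finally show ?thesis .
  qed
next
  case (OLine h m)
  then show ?thesis by (auto simp: Bf_def pvec_def inner2 field_simps)
qed

lemma wcoord_orev: "wcoord (orev C) = - wcoord C"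
  by (cases C) (simp_all add: vec_eq_iff forall_4 vec4_def)

lemma valid_orev[simp]: "valid_oc (orev C) = valid_oc C" by (cases C) auto
lemma supp_orev[simp]: "supp (orev C) = supp C" by (cases C) auto
lemma is_line_orev[simp]: "is_line (orev C) = is_line C" by (cases C) auto
lemma orev_orev[simp]: "orev (orev C) = C" by (cases C) auto

lemma is_line_B: "valid_oc C \<Longrightarrow> is_line C \<longleftrightarrow> wcoord C $ 2 = 0"
  by (cases C) auto

lemma rep: assumes "Bf v v = 1/2" shows "\<exists>C. valid_oc C \<and> wcoord C = v"
proof (cases "v$2 = 0")
  case True
  then have h: "v$3^2 + v$4^2 = 1" using assms by (simp add: Bf_def power2_eq_square)
  define h where "h = (vector [v$3, v$4] :: real^2)"
  have "(norm h)^2 = 1" using h by (simp add: norm2 h_def)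
  then have "norm h = 1" using norm_ge_zero[of h] by (auto simp: power2_eq_1_iff)
  moreover have "wcoord (OLine h (v$1/2)) = v"
    using True by (simp add: h_def vec_eq_iff forall_4)
  ultimately show ?thesis by (intro exI[of _ "OLine h (v$1/2)"]) simp
next
  case False
  have e: "v$3^2 + v$4^2 - 1 = v$1 * v$2" using assms by (simp add: Bf_def field_simps power2_eq_square)
  define c where "c = (vector [v$3/v$2, v$4/v$2] :: real^2)"
  have "wcoord (OCirc c (1/v$2)) = v"
    unfolding wcoord_circ using False e
    by (simp add: c_def vec_eq_iff forall_4 field_simps power2_eq_square)
  then show ?thesis using False by (intro exI[of _ "OCirc c (1/v$2)"]) simp
qed

lemma winj: assumes "valid_oc C" "valid_oc C'" "wcoord C = wcoord C'" shows "C = C'"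
proof -
  have e: "wcoord C $ k = wcoord C' $ k" for k using assms(3) by simp
  show ?thesis
  proof (cases C)
    case (OCirc c r)
    note C = this
    show ?thesis
    proof (cases C')
      case (OCirc c' r')
      have r: "r \<noteq> 0" "r' \<noteq> 0" using assms C OCirc by auto
      have "r = r'" using e[of 2] C OCirc by simp
      moreover have "c$1 = c'$1" "c$2 = c'$2" using e[of 3] e[of 4] C OCirc r \<open>r = r'\<close> by auto
      ultimately show ?thesis using C OCirc by (simp add: vec_eq_iff forall_2)
    next
      case (OLine h m)
      then show ?thesis using e[of 2] C assms by simp
    qed
  next
    case (OLine h m)
    note C = this
    show ?thesis
    proof (cases C')
      case (OCirc c' r')
      then show ?thesis using e[of 2] C assms by simp
    next
      case (OLine h' m')
      have "m = m'" "h$1 = h'$1" "h$2 = h'$2" using e[of 1] e[of 3] e[of 4] C OLine by auto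
      then show ?thesis using C OLine by (simp add: vec_eq_iff forall_2)
    qed
  qed
qed

lemma orev_ne: "valid_oc C \<Longrightarrow> orev C \<noteq> C"
proof (cases C)
  case (OLine h m)
  assume v: "valid_oc C"
  show ?thesis
  proof
    assume "orev C = C"
    then have "h = - h" using OLine by simp
    then have "h = 0" by (simp add: vec_eq_iff)
    then show False using v OLine by simp
  qed
qed auto


lemma dist_of_sq: "0 \<le> \<rho> \<Longrightarrow> (x$1 - c$1)^2 + (x$2 - c$2)^2 = \<rho>^2 \<Longrightarrow> dist (c::real^2) x = \<rho>"
  using dist2[of c x] power2_eq_iff_nonneg[of "dist c x" \<rho>] by simp

lemma Bf_p: "Bf v (pvec x) = -(v$1 + v$2*(x$1^2 + x$2^2))/4 + (v$3*x$1 + v$4*x$2)/2"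
  by (simp add: Bf_def pvec_def)

lemma circ_case:
  assumes vC': "valid_oc C'" and r: "r \<noteq> 0"
    and Z: "\<And>x. x \<in> sphere c \<bar>r\<bar> \<Longrightarrow> Bf (wcoord C') (pvec x) = 0"
  shows "C' = OCirc c r \<or> C' = orev (OCirc c r)"
proof -
  define v where "v = wcoord C'"
  define \<rho> where "\<rho> = \<bar>r\<bar>"
  have \<rho>: "\<rho> > 0" "\<rho>^2 = r^2" using r by (auto simp: \<rho>_def)
  define a where "a = c$1"
  define b where "b = c$2"
  define p1 where "p1 = (vector [a + \<rho>, b] :: real^2)"
  define p2 where "p2 = (vector [a - \<rho>, b] :: real^2)"
  define p3 where "p3 = (vector [a, b + \<rho>] :: real^2)"
  define p4 where "p4 = (vector [a, b - \<rho>] :: real^2)"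
  have "p1 \<in> sphere c \<bar>r\<bar>" "p2 \<in> sphere c \<bar>r\<bar>" "p3 \<in> sphere c \<bar>r\<bar>" "p4 \<in> sphere c \<bar>r\<bar>"
    using \<rho> unfolding mem_sphere \<rho>_def[symmetric]
    by (auto intro!: dist_of_sq simp: p1_def p2_def p3_def p4_def a_def b_def)
  then have e1: "Bf v (pvec p1) = 0" and e2: "Bf v (pvec p2) = 0"
    and e3: "Bf v (pvec p3) = 0" and e4: "Bf v (pvec p4) = 0" using Z v_def by auto
  have d12: "Bf v (pvec p1) - Bf v (pvec p2) = \<rho> * (v$3 - v$2 * a)"
    unfolding Bf_p by (simp add: p1_def p2_def field_simps power2_eq_square)
  have d34: "Bf v (pvec p3) - Bf v (pvec p4) = \<rho> * (v$4 - v$2 * b)"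
    unfolding Bf_p by (simp add: p3_def p4_def field_simps power2_eq_square)
  have s12: "Bf v (pvec p1) + Bf v (pvec p2) = -(v$1 + v$2*(a^2 + \<rho>^2 + b^2))/2 + v$3 * a + v$4 * b"
    unfolding Bf_p by (simp add: p1_def p2_def field_simps power2_eq_square)
  have v3: "v$3 = v$2 * a" using d12 e1 e2 \<rho> by simp
  have v4: "v$4 = v$2 * b" using d34 e3 e4 \<rho> by simp
  have v1': "v$1 = v$2 * (a^2 + b^2 - \<rho>^2)" using s12 e1 e2 v3 v4
    by (simp add: field_simps power2_eq_square)
  have v1: "v$1 = v$2 * (a^2 + b^2 - r^2)" using v1' \<rho>(2) by simp
  define s where "s = v$2 * r"
  have c1: "v$1 = s * ((c$1^2 + c$2^2 - r^2) / r)"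
    unfolding v1 s_def a_def b_def using r by (simp add: field_simps)
  have c2: "v$2 = s * (1 / r)" unfolding s_def using r by simp
  have c3: "v$3 = s * (c$1 / r)" unfolding v3 s_def a_def using r by simp
  have c4: "v$4 = s * (c$2 / r)" unfolding v4 s_def b_def using r by simp
  have vs: "v = s *\<^sub>R wcoord (OCirc c r)"
    unfolding wcoord_circ using c1 c2 c3 c4 by (simp add: vec_eq_iff forall_4)
  have "1/2 = Bf v v" using valid_B[OF vC'] v_def by simp
  also have "\<dots> = s^2 * Bf (wcoord (OCirc c r)) (wcoord (OCirc c r))"
    unfolding vs by (simp add: Bf_scale_left Bf_scale_right power2_eq_square)
  also have "\<dots> = s^2 / 2" using valid_B[of "OCirc c r"] r by simp
  finally have "s^2 = 1" by simp
  then have "s = 1 \<or> s = -1" by (simp add: power2_eq_1_iff)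
  then show ?thesis
  proof
    assume "s = 1"
    then have "wcoord C' = wcoord (OCirc c r)" using vs v_def by simp
    then show ?thesis using winj[OF vC', of "OCirc c r"] r by simp
  next
    assume "s = -1"
    then have "wcoord C' = - wcoord (OCirc c r)" using vs v_def by simp
    then have "wcoord C' = wcoord (orev (OCirc c r))" by (simp only: wcoord_orev)
    then show ?thesis using winj[OF vC', of "orev (OCirc c r)"] r by simp
  qed
qed

lemma line_case:
  assumes "norm h = 1" "norm h' = 1" and S: "{x. h \<bullet> x = m} = {x. h' \<bullet> x = m'}"
  shows "OLine h' m' = OLine h m \<or> OLine h' m' = orev (OLine h m)"
proof -
  have u: "h$1^2 + h$2^2 = 1" "h'$1^2 + h'$2^2 = 1" using assms(1,2) norm2[of h] norm2[of h'] by auto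
  define x0 where "x0 = m *\<^sub>R h"
  define hp where "hp = (vector [- h$2, h$1] :: real^2)"
  have "h \<bullet> x0 = m" using u by (simp add: x0_def inner2 algebra_simps power2_eq_square) (metis distrib_left mult.right_neutral)
  then have m': "h' \<bullet> x0 = m'" using S by blast
  have "h \<bullet> hp = 0" by (simp add: inner2 hp_def)
  then have "h \<bullet> (x0 + hp) = m" using \<open>h \<bullet> x0 = m\<close> by (simp add: inner_add_right)
  then have "h' \<bullet> (x0 + hp) = m'" using S by blast
  then have "h' \<bullet> hp = 0" using m' by (simp add: inner_add_right)
  then have hp0: "h'$2 * h$1 - h'$1 * h$2 = 0" by (simp add: inner2 hp_def)
  define l where "l = h'$1 * h$1 + h'$2 * h$2"
  have l1: "h'$1 = l * h$1" using u hp0 unfolding l_def power2_eq_square by algebra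
  have l2: "h'$2 = l * h$2" using u hp0 unfolding l_def power2_eq_square by algebra
  have "l^2 = 1" using u l1 l2 unfolding power2_eq_square by algebra
  then have l: "l = 1 \<or> l = -1" by (simp add: power2_eq_1_iff)
  have hl: "h' = l *\<^sub>R h" using l1 l2 by (simp add: vec_eq_iff forall_2)
  have hh: "h \<bullet> h = 1" using assms(1) power2_norm_eq_inner[of h] by simp
  have "m' = l * m" using m' hl hh by (simp add: x0_def mult.commute)
  then show ?thesis using l hl by auto
qed

lemma supp_eq: assumes "valid_oc C" "valid_oc C'" "supp C = supp C'"
  shows "C' = C \<or> C' = orev C"
proof (cases C)
  case (OCirc c r)
  have r: "r \<noteq> 0" using assms OCirc by simp
  have "Bf (wcoord C') (pvec x) = 0" if "x \<in> sphere c \<bar>r\<bar>" for x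
  proof -
    have "x \<in> supp C'" using that assms(3) OCirc by (metis supp.simps(1))
    then show ?thesis using supp_B[OF assms(2)] by blast
  qed
  then show ?thesis using circ_case[OF assms(2) r] OCirc by blast
next
  case (OLine h m)
  note L = this
  show ?thesis
  proof (cases C')
    case (OCirc c r)
    have r: "r \<noteq> 0" using assms OCirc by simp
    have "Bf (wcoord C) (pvec x) = 0" if "x \<in> sphere c \<bar>r\<bar>" for x
    proof -
      have "x \<in> supp C" using that assms(3) OCirc by (metis supp.simps(1))
      then show ?thesis using supp_B[OF assms(1)] by blast
    qed
    then have "C = C' \<or> C = orev C'" using circ_case[OF assms(1) r] OCirc by blast
    then show ?thesis by auto
  next
    case (OLine h' m')
    then show ?thesis using line_case[of h h' m m'] assms L by simp
  qed
qed


lemma pos_aux: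
  fixes t c0 p q Z :: real
  assumes "t > 0" "c0 > 0" "t * (1 + (\<bar>p\<bar> + \<bar>q\<bar>) * Z) = c0" "Z \<ge> 0"
  shows "t * (2*c0 - p*t*Z) / 4 > 0"
proof -
  have "p * t * Z \<le> \<bar>p\<bar> * t * Z" using assms by (intro mult_right_mono) auto
  also have "\<dots> \<le> (\<bar>p\<bar> + \<bar>q\<bar>) * t * Z" using assms by (intro mult_right_mono) auto
  also have "\<dots> = c0 - t" using assms(3) by (simp add: algebra_simps)
  finally have "2*c0 - p*t*Z > 0" using assms by linarith
  then show ?thesis using assms by simp
qed

lemma vector2_simps[simp]: "(vector [a, b] :: real^2) $ 1 = a" "(vector [a, b] :: real^2) $ 2 = b"
  by simp_all

lemma pair_common:
  assumes v1: "valid_oc C1" and v2: "valid_oc C2"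
    and x1: "x0 \<in> supp C1" and x2: "x0 \<in> supp C2"
    and dis: "oint C1 \<inter> oint C2 = {}"
  shows "Bf (wcoord C1) (wcoord C2) = -1/2"
proof -
  define w where "w = wcoord C1"
  define w' where "w' = wcoord C2"
  define a where "a = x0$1"
  define b where "b = x0$2"
  have "Bf w (pvec x0) = 0" using supp_B[OF v1] x1 w_def by simp
  then have h1: "w$1 = 2*(w$3*a + w$4*b) - w$2*(a^2+b^2)"
    unfolding Bf_p a_def b_def by (simp add: field_simps)
  have "Bf w' (pvec x0) = 0" using supp_B[OF v2] x2 w'_def by simp
  then have h2: "w'$1 = 2*(w'$3*a + w'$4*b) - w'$2*(a^2+b^2)"
    unfolding Bf_p a_def b_def by (simp add: field_simps)
  have "Bf w w = 1/2" using valid_B[OF v1] w_def by simp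
  then have n1: "w$3^2 + w$4^2 - w$1*w$2 = 1" by (simp add: Bf_def field_simps power2_eq_square)
  have "Bf w' w' = 1/2" using valid_B[OF v2] w'_def by simp
  then have n2: "w'$3^2 + w'$4^2 - w'$1*w'$2 = 1" by (simp add: Bf_def field_simps power2_eq_square)
  define U1 where "U1 = w$2*a - w$3"
  define U2 where "U2 = w$2*b - w$4"
  define V1 where "V1 = w'$2*a - w'$3"
  define V2 where "V2 = w'$2*b - w'$4"
  have F1: "U1^2 + U2^2 = 1" using n1 unfolding h1 U1_def U2_def power2_eq_square by algebra
  have G1: "V1^2 + V2^2 = 1" using n2 unfolding h2 V1_def V2_def power2_eq_square by algebra
  have F2: "Bf w (pvec (vector [a + y1, b + y2])) = -(w$2*(y1^2+y2^2) + 2*(U1*y1 + U2*y2))/4" for y1 y2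
    unfolding Bf_p h1 U1_def U2_def by (simp add: field_simps power2_eq_square)
  have G2: "Bf w' (pvec (vector [a + y1, b + y2])) = -(w'$2*(y1^2+y2^2) + 2*(V1*y1 + V2*y2))/4" for y1 y2
    unfolding Bf_p h2 V1_def V2_def by (simp add: field_simps power2_eq_square)
  have F3: "Bf w w' = (U1*V1 + U2*V2)/2"
    unfolding Bf_def h1 h2 U1_def U2_def V1_def V2_def by (simp add: field_simps power2_eq_square)
  have UV: "V1 = - U1 \<and> V2 = - U2"
  proof (rule ccontr)
    assume ne: "\<not> (V1 = - U1 \<and> V2 = - U2)"
    define z1 where "z1 = U1 + V1"
    define z2 where "z2 = U2 + V2"
    define Z where "Z = z1^2 + z2^2"
    have "z1 \<noteq> 0 \<or> z2 \<noteq> 0" using ne unfolding z1_def z2_def by auto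
    then have Zp: "Z > 0" unfolding Z_def by (auto simp: sum_power2_gt_zero_iff)
    define c0 where "c0 = 1 + U1*V1 + U2*V2"
    have c0Z: "c0 = Z/2" unfolding c0_def Z_def z1_def z2_def using F1 G1
      by (simp add: field_simps power2_eq_square)
    have c0p: "c0 > 0" using Zp c0Z by simp
    define K where "K = (\<bar>w$2\<bar> + \<bar>w'$2\<bar>) * Z"
    have Kp: "K \<ge> 0" unfolding K_def using Zp by simp
    define t where "t = c0 / (1 + K)"
    have tp: "t > 0" unfolding t_def using c0p Kp by simp
    have tK: "t * (1 + (\<bar>w$2\<bar> + \<bar>w'$2\<bar>) * Z) = c0" unfolding t_def K_def[symmetric] using Kp by simp
    have tK': "t * (1 + (\<bar>w'$2\<bar> + \<bar>w$2\<bar>) * Z) = c0" using tK by (simp add: add.commute)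
    define x where "x = (vector [a + (- t*z1), b + (- t*z2)] :: real^2)"
    have e: "Bf w (pvec x) = -(w$2*(t^2*Z) - 2*t*(U1*z1+U2*z2))/4"
      unfolding x_def F2 Z_def by (simp add: field_simps power2_eq_square)
    have uz: "U1*z1 + U2*z2 = c0" unfolding z1_def z2_def c0_def using F1
      by (simp add: algebra_simps power2_eq_square)
    have "Bf w (pvec x) = t * (2*c0 - w$2*t*Z) / 4" using e uz by (simp add: field_simps power2_eq_square)
    then have "Bf w (pvec x) > 0" using pos_aux[OF tp c0p tK] Zp by simp
    then have i1: "x \<in> oint C1" using oint_B[OF v1] w_def by simp
    have e': "Bf w' (pvec x) = -(w'$2*(t^2*Z) - 2*t*(V1*z1+V2*z2))/4"
      unfolding x_def G2 Z_def by (simp add: field_simps power2_eq_square)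
    have vz: "V1*z1 + V2*z2 = c0" unfolding z1_def z2_def c0_def using G1
      by (simp add: algebra_simps power2_eq_square)
    have "Bf w' (pvec x) = t * (2*c0 - w'$2*t*Z) / 4" using e' vz by (simp add: field_simps power2_eq_square)
    then have "Bf w' (pvec x) > 0" using pos_aux[OF tp c0p tK'] Zp by simp
    then have i2: "x \<in> oint C2" using oint_B[OF v2] w'_def by simp
    show False using i1 i2 dis by blast
  qed
  have "Bf w w' = -(U1^2 + U2^2)/2" using F3 UV by (simp add: power2_eq_square)
  then show ?thesis using F1 w_def w'_def by simp
qed

lemma line_line:
  assumes "norm h = 1" "norm h' = 1" and dis: "oint (OLine h m) \<inter> oint (OLine h' m') = {}"
  shows "h' = - h"
proof (rule ccontr)
  assume ne: "h' \<noteq> - h"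
  define z where "z = h + h'"
  have hh: "h \<bullet> h = 1" "h' \<bullet> h' = 1" using assms power2_norm_eq_inner[of h] power2_norm_eq_inner[of h'] by auto
  have "z \<noteq> 0" using ne unfolding z_def by (metis add.commute add_eq_0_iff)
  then have zz: "z \<bullet> z > 0" by simp
  define c0 where "c0 = 1 + h \<bullet> h'"
  have "z \<bullet> z = 2 * c0" unfolding z_def c0_def using hh by (simp add: inner_add_left inner_add_right inner_commute)
  then have c0p: "c0 > 0" using zz by simp
  define t where "t = (\<bar>m\<bar> + \<bar>m'\<bar> + 1) / c0"
  define x where "x = t *\<^sub>R z"
  have "h \<bullet> x = t * c0" unfolding x_def z_def c0_def using hh by (simp add: inner_add_right)
  also have "\<dots> = \<bar>m\<bar> + \<bar>m'\<bar> + 1" unfolding t_def using c0p by simp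
  finally have "x \<in> oint (OLine h m)" by simp
  moreover have "h' \<bullet> x = t * c0" unfolding x_def z_def c0_def using hh by (simp add: inner_add_right inner_commute)
  then have "h' \<bullet> x = \<bar>m\<bar> + \<bar>m'\<bar> + 1" unfolding t_def using c0p by simp
  then have "x \<in> oint (OLine h' m')" by simp
  ultimately show False using dis by blast
qed

lemma pair_B:
  assumes v1: "valid_oc C1" and v2: "valid_oc C2" and T: "tangent_at C1 C2 p"
    and dis: "oint C1 \<inter> oint C2 = {}"
  shows "Bf (wcoord C1) (wcoord C2) = -1/2"
proof -
  consider "is_line C1 \<and> is_line C2" | "\<exists>q. supp C1 \<inter> supp C2 = {q}" using T unfolding tangent_at_def by blast
  then show ?thesis
  proof cases
    case 1
    then obtain h m h' m' where C: "C1 = OLine h m" "C2 = OLine h' m'"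
      by (cases C1; cases C2) auto
    have n: "norm h = 1" "norm h' = 1" using v1 v2 C by auto
    have "h' = - h" using line_line[OF n] dis C by simp
    moreover have "h$1^2 + h$2^2 = 1" using n norm2[of h] by simp
    ultimately show ?thesis using C by (simp add: Bf_def field_simps power2_eq_square)
  next
    case 2
    then obtain q where "supp C1 \<inter> supp C2 = {q}" by blast
    then have "q \<in> supp C1" "q \<in> supp C2" by auto
    then show ?thesis using pair_common[OF v1 v2 _ _ dis] by blast
  qed
qed

lemma Wmat_row[simp]: "Wmat D $ k = wcoord (D k)" by (simp add: Wmat_def)

lemma tangent_orev: "tangent_at (orev C1) (orev C2) p = tangent_at C1 C2 p"
  by (simp add: tangent_at_def)

lemma od_valid: "oriented_descartes D \<Longrightarrow> valid_oc (D k)"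
  by (simp add: oriented_descartes_def descartes_def)

lemma od_P: assumes "oriented_descartes D"
  shows "\<exists>P :: 4 \<Rightarrow> 4 \<Rightarrow> (real^2) option. (\<forall>i j. i \<noteq> j \<longrightarrow> tangent_at (D i) (D j) (P i j)) \<and>
        (\<forall>i j k l. i \<noteq> j \<longrightarrow> k \<noteq> l \<longrightarrow> P i j = P k l \<longrightarrow> {i, j} = {k, l})"
proof -
  have "descartes D" using assms by (simp add: oriented_descartes_def)
  then show ?thesis by (simp only: descartes_def)
qed

lemma gram_of_od: assumes "oriented_descartes D" shows "gram (Wmat D)"
proof -
  note valid = od_valid[OF assms]
  obtain P where PP: "(\<forall>i j. i \<noteq> j \<longrightarrow> tangent_at (D i) (D j) (P i j)) \<and>
        (\<forall>i j k l. i \<noteq> j \<longrightarrow> k \<noteq> l \<longrightarrow> P i j = P k l \<longrightarrow> {i, j} = {k, l})"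
    using od_P[OF assms] by (rule exE)
  have P: "tangent_at (D i) (D j) (P i j)" if "i \<noteq> j" for i j using PP that by simp
  have "Bf (wcoord (D j)) (wcoord (D k)) = qd j k" for j k
  proof (cases "j = k")
    case True
    then show ?thesis using valid_B[OF valid] by (simp add: qd_def)
  next
    case False
    have "pairwise_disjoint_interiors D \<or> pairwise_disjoint_interiors (orev \<circ> D)"
      using assms by (simp add: oriented_descartes_def)
    then have "Bf (wcoord (D j)) (wcoord (D k)) = -1/2"
    proof
      assume "pairwise_disjoint_interiors D"
      then have "oint (D j) \<inter> oint (D k) = {}" using False unfolding pairwise_disjoint_interiors_def by blast
      then show ?thesis using pair_B[OF valid valid P[OF False]] by blast
    next
      assume "pairwise_disjoint_interiors (orev \<circ> D)"
      then have "oint (orev (D j)) \<inter> oint (orev (D k)) = {}" using False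
        unfolding pairwise_disjoint_interiors_def by (metis comp_apply)
      moreover have "tangent_at (orev (D j)) (orev (D k)) (P j k)" using P[OF False] by (simp add: tangent_orev)
      ultimately have "Bf (wcoord (orev (D j))) (wcoord (orev (D k))) = -1/2"
        using pair_B[of "orev (D j)" "orev (D k)"] valid by simp
      then show ?thesis by (simp add: wcoord_orev Bf_neg_left Bf_neg_right)
    qed
    then show ?thesis using False by (simp add: qd_def)
  qed
  then show ?thesis by (simp add: gram_def)
qed


lemma ex_4: "(\<exists>x::4. P x) \<longleftrightarrow> P 1 \<or> P 2 \<or> P 3 \<or> P 4"
  by (metis exhaust_4)

lemma split4_ex: fixes i j :: 4 assumes "i \<noteq> j" shows "\<exists>k l. distinct [i,j,k,l]"
  using assms exhaust_4[of i] exhaust_4[of j] by (elim disjE) (simp_all add: ex_4)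

lemma split4_univ: fixes i j k l :: 4 assumes "distinct [i,j,k,l]" shows "UNIV = {i,j,k,l}"
proof -
  have "card {i,j,k,l} = 4" using assms by simp
  then show ?thesis using card_subset_eq[of UNIV "{i,j,k,l}"] by simp
qed

lemma split4_sum: fixes i j k l :: 4 assumes "distinct [i,j,k,l]"
  shows "(\<Sum>m\<in>UNIV. f m) = f i + f j + f k + f l"
  using assms by (simp add: split4_univ[OF assms] add.assoc)

lemma gram_val: "gram W \<Longrightarrow> Bf (W$j) (W$k) = (if j = k then 1/2 else -1/2)"
  by (simp add: gram_def qd_def)

lemma Bf_eps: "Bf v eps = - v$2 / 4" by (simp add: Bf_def eps_def)
lemma eps_null: "Bf eps eps = 0" by (simp add: Bf_def eps_def)
lemma pvec_null: "Bf (pvec x) (pvec x) = 0" by (simp add: Bf_def pvec_def field_simps power2_eq_square)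
lemma pvec_eps: "Bf (pvec x) eps = - 1/4" by (simp add: Bf_eps pvec_def)
lemma eps_ne: "eps \<noteq> 0" by (simp add: eps_def vec_eq_iff forall_4)
lemma pvec_ne: "pvec x \<noteq> 0" by (simp add: pvec_def vec_eq_iff forall_4)
lemma pvec_inj: "pvec x = pvec y \<Longrightarrow> x = y"
  by (simp add: pvec_def vec_eq_iff forall_4 forall_2)

lemma null_sum: assumes "gram W" "Bf y y = 0"
  shows "(\<Sum>k\<in>UNIV. (gv W y k)^2) = (gs W y)^2 / 2"
  using Bf_coord[OF assms(1), of y y] assms(2) by (simp add: power2_eq_square)

lemma nappe: assumes "gram W" "Bf y y = 0" "Bf z z = 0" "Bf y z < 0"
  shows "gs W y * gs W z > 0"
proof (rule ccontr)
  assume "\<not> gs W y * gs W z > 0"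
  then have le: "gs W y * gs W z \<le> 0" by simp
  define G where "G = (\<chi> k. gv W y k)"
  define H where "H = (\<chi> k. gv W z k)"
  have GG: "G \<bullet> G = (gs W y)^2 / 2" using null_sum[OF assms(1,2)] by (simp add: G_def inner_vec_def power2_eq_square)
  have HH: "H \<bullet> H = (gs W z)^2 / 2" using null_sum[OF assms(1,3)] by (simp add: H_def inner_vec_def power2_eq_square)
  have GH: "Bf y z = G \<bullet> H - (1/2) * gs W y * gs W z"
    using Bf_coord[OF assms(1), of y z] by (simp add: G_def H_def inner_vec_def)
  have "(G \<bullet> H)^2 \<le> (G \<bullet> G) * (H \<bullet> H)" by (rule Cauchy_Schwarz_ineq)
  also have "\<dots> = ((1/2) * gs W y * gs W z)^2" unfolding GG HH by (simp add: power2_eq_square)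
  finally have "\<bar>G \<bullet> H\<bar> \<le> \<bar>(1/2) * gs W y * gs W z\<bar>" using abs_le_square_iff by blast
  moreover have "\<bar>(1/2) * gs W y * gs W z\<bar> = - ((1/2) * gs W y * gs W z)" using le by simp
  moreover have "- (G \<bullet> H) \<le> \<bar>G \<bullet> H\<bar>" by simp
  ultimately have "G \<bullet> H \<ge> (1/2) * gs W y * gs W z" by linarith
  then show False using GH assms(4) by simp
qed

lemma gs_eps_ne: assumes "gram W" shows "gs W eps \<noteq> 0"
proof
  assume S: "gs W eps = 0"
  have "(\<Sum>k\<in>UNIV. (gv W eps k)^2) = 0" using null_sum[OF assms eps_null] S by simp
  then have "\<forall>k\<in>UNIV. (gv W eps k)^2 = 0" using sum_nonneg_eq_0_iff[of UNIV "\<lambda>k. (gv W eps k)^2"] by simp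
  then have "gv W eps k = 0" for k by simp
  then have "eps = 0" using coord[OF assms, of eps] S by simp
  then show False using eps_ne by simp
qed

lemma two_pos: fixes a b c d :: real
  assumes "a > 0" "b > 0" "a+b+c+d < 0" "a^2+b^2+c^2+d^2 = (a+b+c+d)^2/2"
  shows False
proof -
  have "0 \<le> (a-b)^2" "0 \<le> (c-d)^2" by simp_all
  moreover have "(a+b)*(c+d) < 0" using assms by (intro mult_pos_neg) auto
  ultimately show False using assms(4) by (simp add: power2_eq_square algebra_simps)
qed

lemma at_most_one_pos: assumes "gram W" "Bf y y = 0" "gs W y < 0" "i \<noteq> j"
  shows "\<not> (gv W y i > 0 \<and> gv W y j > 0)"
proof
  assume p: "gv W y i > 0 \<and> gv W y j > 0"
  obtain k l where d: "distinct [i,j,k,l]" using split4_ex[OF assms(4)] by blast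
  have "(\<Sum>m\<in>UNIV. (gv W y m)^2) = (gs W y)^2 / 2" using null_sum[OF assms(1,2)] .
  then have "(gv W y i)^2 + (gv W y j)^2 + (gv W y k)^2 + (gv W y l)^2
      = (gv W y i + gv W y j + gv W y k + gv W y l)^2/2"
    unfolding split4_sum[OF d] gs_def by simp
  moreover have "gv W y i + gv W y j + gv W y k + gv W y l < 0"
    using assms(3) unfolding gs_def split4_sum[OF d] by simp
  ultimately show False using two_pos p by blast
qed

lemma Wmat_orev: "Wmat (orev \<circ> C) = - Wmat C"
  by (simp add: vec_eq_iff wcoord_orev)

lemma gram_neg: "gram W \<Longrightarrow> gram (- W)"
  by (simp add: gram_def Bf_neg_left Bf_neg_right)

lemma gs_neg: "gs (- W) y = - gs W y"
  by (simp add: gs_def gv_def Bf_neg_left sum_negf)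

lemma pdi_of_gram: assumes v: "\<And>k. valid_oc (C k)" and g: "gram (Wmat C)" and s: "gs (Wmat C) eps < 0"
  shows "pairwise_disjoint_interiors C"
  unfolding pairwise_disjoint_interiors_def
proof (intro allI impI)
  fix i j assume ij: "(i::4) \<noteq> j"
  show "oint (C i) \<inter> oint (C j) = {}"
  proof (rule ccontr)
    assume "oint (C i) \<inter> oint (C j) \<noteq> {}"
    then obtain x where x: "x \<in> oint (C i)" "x \<in> oint (C j)" by blast
    have pi: "gv (Wmat C) (pvec x) i > 0" using oint_B[OF v] x by (simp add: gv_def)
    have pj: "gv (Wmat C) (pvec x) j > 0" using oint_B[OF v] x by (simp add: gv_def)
    have "gs (Wmat C) (pvec x) * gs (Wmat C) eps > 0"
      using nappe[OF g pvec_null eps_null] pvec_eps by simp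
    then have "gs (Wmat C) (pvec x) < 0" using s by (simp add: zero_less_mult_iff)
    then show False using at_most_one_pos[OF g pvec_null _ ij] pi pj by blast
  qed
qed

lemma TPU: assumes g: "gram W" and ij: "i \<noteq> j" and y: "Bf y y = 0" "gv W y i = 0" "gv W y j = 0"
  shows "\<exists>t. y = t *\<^sub>R (W$i + W$j)"
proof -
  obtain k l where d: "distinct [i,j,k,l]" using split4_ex[OF ij] by blast
  have "(\<Sum>m\<in>UNIV. (gv W y m)^2) = (gs W y)^2 / 2" using null_sum[OF g y(1)] .
  then have e: "(gv W y k)^2 + (gv W y l)^2 = (gv W y k + gv W y l)^2/2"
    unfolding split4_sum[OF d] gs_def using y by simp
  have "(gv W y k - gv W y l)^2 = 0" using e by (simp add: power2_eq_square algebra_simps)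
  then have kl: "gv W y l = gv W y k" by simp
  have S: "gs W y = 2 * gv W y k" unfolding gs_def split4_sum[OF d] using y kl by simp
  have "y = (\<Sum>m\<in>UNIV. (gv W y m - (1/2) * gs W y) *\<^sub>R W$m)" by (rule coord[OF g])
  also have "\<dots> = (- gv W y k) *\<^sub>R (W$i + W$j)"
    unfolding split4_sum[OF d] S using y kl by (simp add: scaleR_add_right)
  finally show ?thesis by blast
qed

lemma n_facts: assumes g: "gram W" and ij: "i \<noteq> j"
  shows "Bf (W$i + W$j) (W$i + W$j) = 0" "Bf (W$i) (W$i + W$j) = 0" "Bf (W$j) (W$i + W$j) = 0"
  using ij by (simp_all add: Bf_add_left Bf_add_right gram_val[OF g])

definition marker :: "(real^2) option \<Rightarrow> real^4" where
  "marker p = (case p of None \<Rightarrow> eps | Some x \<Rightarrow> pvec x)"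

lemma TP: assumes v: "\<And>k. valid_oc (C k)" and g: "gram (Wmat C)" and ij: "i \<noteq> j"
    and T: "tangent_at (C i) (C j) p"
  shows "\<exists>a. a \<noteq> 0 \<and> marker p = a *\<^sub>R (Wmat C $ i + Wmat C $ j)"
proof (cases p)
  case None
  then have "is_line (C i)" "is_line (C j)" using T by (auto simp: tangent_at_def)
  then have "wcoord (C i) $ 2 = 0" "wcoord (C j) $ 2 = 0" using is_line_B[OF v] by auto
  then have "gv (Wmat C) eps i = 0" "gv (Wmat C) eps j = 0" by (simp_all add: gv_def Bf_eps)
  then obtain t where t: "eps = t *\<^sub>R (Wmat C $ i + Wmat C $ j)" using TPU[OF g ij eps_null] by blast
  then have "t \<noteq> 0" using eps_ne by auto
  then show ?thesis using t None by (auto simp: marker_def)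
next
  case (Some x)
  then have "supp (C i) \<inter> supp (C j) = {x}" using T by (auto simp: tangent_at_def)
  then have "x \<in> supp (C i)" "x \<in> supp (C j)" by auto
  then have "gv (Wmat C) (pvec x) i = 0" "gv (Wmat C) (pvec x) j = 0"
    using supp_B[OF v] by (simp_all add: gv_def)
  then obtain t where t: "pvec x = t *\<^sub>R (Wmat C $ i + Wmat C $ j)" using TPU[OF g ij pvec_null] by blast
  then have "t \<noteq> 0" using pvec_ne by auto
  then show ?thesis using t Some by (auto simp: marker_def)
qed

lemma prop_pairs: assumes g: "gram W" and ij: "i \<noteq> j" and kl: "k \<noteq> l" and a: "a \<noteq> 0"
    and e: "a *\<^sub>R (W$i + W$j) = b *\<^sub>R (W$k + W$l)"
  shows "{i, j} = {k, l}"
proof -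
  obtain p q where d: "distinct [i,j,p,q]" using split4_ex[OF ij] by blast
  have val: "a * (Bf (W$m) (W$i) + Bf (W$m) (W$j)) = b * (Bf (W$m) (W$k) + Bf (W$m) (W$l))" for m
    using arg_cong[OF e, of "Bf (W$m)"] by (simp add: Bf_scale_right Bf_add_right)
  have np: "p \<notin> {k, l}"
  proof
    assume "p \<in> {k, l}"
    then show False using val[of p] d kl a by (auto simp: gram_val[OF g])
  qed
  have nq: "q \<notin> {k, l}"
  proof
    assume "q \<in> {k, l}"
    then show False using val[of q] d kl a by (auto simp: gram_val[OF g])
  qed
  have "k \<in> {i,j,p,q}" "l \<in> {i,j,p,q}" using split4_univ[OF d] by auto
  then have "k \<in> {i,j}" "l \<in> {i,j}" using np nq by auto
  then show ?thesis using kl ij by auto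
qed

definition tp :: "real^4^4 \<Rightarrow> 4 \<Rightarrow> 4 \<Rightarrow> (real^2) option" where
  "tp W i j = (let n = W$i + W$j in if n$2 = 0 then None else Some (vector [n$3/n$2, n$4/n$2]))"

lemma pvec_scale: assumes "n$2 \<noteq> 0" "Bf n n = 0"
  shows "pvec (vector [n$3/n$2, n$4/n$2]) = (1/n$2) *\<^sub>R n"
proof -
  have "n$1 * n$2 = n$3^2 + n$4^2" using assms(2) by (simp add: Bf_def field_simps power2_eq_square)
  then have "n$2 * (n$1 * n$2) = n$2 * (n$3^2 + n$4^2)" by simp
  then have h2: "n$2 * (n$3 * n$3) + n$2 * (n$4 * n$4) = n$1 * (n$2 * n$2)"
    by (simp add: algebra_simps power2_eq_square)
  show ?thesis using assms(1) h2
    by (simp add: pvec_def vec_eq_iff forall_4 field_simps power2_eq_square)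
qed

lemma tangent_of_gram: assumes v: "\<And>k. valid_oc (C k)" and g: "gram (Wmat C)" and ij: "i \<noteq> j"
  shows "tangent_at (C i) (C j) (tp (Wmat C) i j)"
proof -
  define W where "W = Wmat C"
  define n where "n = W$i + W$j"
  have nf: "Bf n n = 0" "Bf (W$i) n = 0" "Bf (W$j) n = 0"
    unfolding n_def W_def using n_facts[OF g ij] by simp_all
  have both: "\<exists>t. pvec z = t *\<^sub>R n" if "z \<in> supp (C i)" "z \<in> supp (C j)" for z
  proof -
    have "gv W (pvec z) i = 0" "gv W (pvec z) j = 0"
      using supp_B[OF v] that by (simp_all add: gv_def W_def)
    then show ?thesis using TPU[OF g[folded W_def] ij pvec_null] unfolding n_def by blast
  qed
  show ?thesis
  proof (cases "n$2 = 0")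
    case False
    define x where "x = (vector [n$3/n$2, n$4/n$2] :: real^2)"
    have px: "pvec x = (1/n$2) *\<^sub>R n" unfolding x_def by (rule pvec_scale[OF False nf(1)])
    have xi: "x \<in> supp (C i)" using supp_B[OF v] px nf(2) by (simp add: Bf_scale_right W_def)
    have xj: "x \<in> supp (C j)" using supp_B[OF v] px nf(3) by (simp add: Bf_scale_right W_def)
    have "z = x" if zi: "z \<in> supp (C i)" and zj: "z \<in> supp (C j)" for z
    proof -
      obtain t where t: "pvec z = t *\<^sub>R n" using both[OF zi zj] by blast
      have "(pvec z)$2 = (t *\<^sub>R n)$2" using t by (rule arg_cong)
      then have "1 = t * n$2" by (simp add: pvec_def)
      then have "t = 1/n$2" using False by (simp add: field_simps)
      then have "pvec z = pvec x" using t px by simp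
      then show ?thesis by (rule pvec_inj)
    qed
    then have S: "supp (C i) \<inter> supp (C j) = {x}" using xi xj by blast
    have "\<not> (is_line (C i) \<and> is_line (C j))"
      using False is_line_B[OF v] by (auto simp: n_def W_def)
    moreover have "tp (Wmat C) i j = Some x" using False by (simp add: tp_def x_def n_def W_def Let_def)
    ultimately show ?thesis using S unfolding tangent_at_def by blast
  next
    case True
    have "n$1 * n$2 = n$3^2 + n$4^2" using nf(1) by (simp add: Bf_def field_simps power2_eq_square)
    then have "n$3^2 + n$4^2 = 0" using True by simp
    then have n34: "n$3 = 0" "n$4 = 0" by (simp_all add: sum_power2_eq_zero_iff)
    have ne: "n \<noteq> 0"
    proof
      assume "n = 0"
      obtain k l where d: "distinct [i,j,k,l]" using split4_ex[OF ij] by blast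
      have "Bf (W$k) n = 0" using \<open>n = 0\<close> by simp
      moreover have "Bf (W$k) n = Bf (W$k) (W$i) + Bf (W$k) (W$j)"
        by (simp add: n_def Bf_add_right)
      ultimately show False using gram_val[OF g[folded W_def], of k i] gram_val[OF g[folded W_def], of k j] d by (auto split: if_splits)
    qed
    have neps: "n = n$1 *\<^sub>R eps" using True n34 by (simp add: eps_def vec_eq_iff forall_4)
    then have n1: "n$1 \<noteq> 0" using ne by auto
    have "Bf (W$i) eps = 0" using nf(2) neps n1 by (metis Bf_scale_right mult_eq_0_iff)
    then have li: "is_line (C i)" using is_line_B[OF v] by (simp add: Bf_eps W_def)
    have "Bf (W$j) eps = 0" using nf(3) neps n1 by (metis Bf_scale_right mult_eq_0_iff)
    then have lj: "is_line (C j)" using is_line_B[OF v] by (simp add: Bf_eps W_def)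
    have "supp (C i) \<inter> supp (C j) = {}"
    proof (rule ccontr)
      assume "supp (C i) \<inter> supp (C j) \<noteq> {}"
      then obtain z where "z \<in> supp (C i)" "z \<in> supp (C j)" by blast
      then obtain t where t: "pvec z = t *\<^sub>R n" using both by blast
      have "(pvec z)$2 = (t *\<^sub>R n)$2" using t by (rule arg_cong)
      then show False using True by (simp add: pvec_def)
    qed
    moreover have "tp (Wmat C) i j = None" using True by (simp add: tp_def n_def W_def Let_def)
    ultimately show ?thesis using li lj unfolding tangent_at_def by blast
  qed
qed

lemma od_of_gram: assumes v: "\<And>k. valid_oc (C k)" and g: "gram (Wmat C)"
  shows "oriented_descartes C"
proof -
  have T: "tangent_at (C i) (C j) (tp (Wmat C) i j)" if "i \<noteq> j" for i j
    using tangent_of_gram[OF v g that] .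
  have U: "{i, j} = {k, l}" if ij: "i \<noteq> j" and kl: "k \<noteq> l" and eq: "tp (Wmat C) i j = tp (Wmat C) k l" for i j k l
  proof -
    obtain a where a: "a \<noteq> 0" "marker (tp (Wmat C) i j) = a *\<^sub>R (Wmat C $ i + Wmat C $ j)"
      using TP[OF v g ij T[OF ij]] by blast
    obtain b where b: "b \<noteq> 0" "marker (tp (Wmat C) k l) = b *\<^sub>R (Wmat C $ k + Wmat C $ l)"
      using TP[OF v g kl T[OF kl]] by blast
    have "a *\<^sub>R (Wmat C $ i + Wmat C $ j) = b *\<^sub>R (Wmat C $ k + Wmat C $ l)"
      using a(2) b(2) eq by simp
    then show ?thesis using prop_pairs[OF g ij kl a(1)] by blast
  qed
  have desc: "descartes C" unfolding descartes_def using v T U by blast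
  have "pairwise_disjoint_interiors C \<or> pairwise_disjoint_interiors (orev \<circ> C)"
  proof (cases "gs (Wmat C) eps < 0")
    case True
    then show ?thesis using pdi_of_gram[OF v g] by blast
  next
    case False
    then have "gs (Wmat C) eps > 0" using gs_eps_ne[OF g] by simp
    then have "gs (Wmat (orev \<circ> C)) eps < 0" by (simp add: Wmat_orev gs_neg)
    moreover have "gram (Wmat (orev \<circ> C))" using gram_neg[OF g] by (simp add: Wmat_orev)
    ultimately show ?thesis using pdi_of_gram[of "orev \<circ> C"] v by simp
  qed
  then show ?thesis using desc by (simp add: oriented_descartes_def)
qed


lemma split4_minus: fixes i j k l :: 4 assumes "distinct [i,j,k,l]"
  shows "(\<Sum>m\<in>UNIV-{i}. f m) = f j + f k + f l"
proof -
  have "UNIV - {i} = {j,k,l}" using split4_univ[OF assms] assms by auto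
  then show ?thesis using assms by (simp add: add.assoc)
qed

lemma Smat_entry: "Smat i $ r $ c = (if r = i then (if c = i then -1 else 2) else (if r = c then 1 else 0))"
  by (simp add: Smat_def)

lemma Smat_mult_row:
  "(Smat i ** M) $ r = (if r = i then 2 *\<^sub>R (\<Sum>m\<in>UNIV-{i}. M$m) - M$i else M$r)"
proof -
  have "(Smat i ** M) $ r $ c = (if r = i then 2 * (\<Sum>m\<in>UNIV-{i}. M$m$c) - M$i$c else M$r$c)" for c
  proof (cases "r = i")
    case True
    have "(Smat i ** M) $ r $ c = (\<Sum>k\<in>UNIV. (if k = i then -1 else 2) * M$k$c)"
      using True by (simp add: matrix_matrix_mult_def Smat_entry)
    also have "\<dots> = (if i = i then -1 else 2) * M$i$c + (\<Sum>k\<in>UNIV-{i}. (if k = i then -1 else 2) * M$k$c)"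
      by (rule sum.remove) auto
    also have "(\<Sum>k\<in>UNIV-{i}. (if k = i then -1 else 2) * M$k$c) = (\<Sum>k\<in>UNIV-{i}. 2 * M$k$c)"
      by (rule sum.cong) auto
    finally show ?thesis using True by (simp add: sum_distrib_left)
  next
    case False
    have "(Smat i ** M) $ r $ c = (\<Sum>k\<in>UNIV. Smat i $ r $ k * M$k$c)"
      by (simp add: matrix_matrix_mult_def)
    also have "\<dots> = (\<Sum>k\<in>UNIV. (if r = k then M$k$c else 0))"
      by (rule sum.cong) (auto simp: Smat_entry False)
    finally show ?thesis using False by simp
  qed
  then show ?thesis by (simp add: vec_eq_iff)
qed

lemma Smat_mv: "(Smat i *v x) $ r = (if r = i then 2 * (\<Sum>m\<in>UNIV-{i}. x$m) - x$i else x$r)"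
proof (cases "r = i")
  case True
  have "(Smat i *v x) $ r = (\<Sum>k\<in>UNIV. (if k = i then -1 else 2) * x$k)"
    using True by (simp add: matrix_vector_mult_def Smat_entry)
  also have "\<dots> = (if i = i then -1 else 2) * x$i + (\<Sum>k\<in>UNIV-{i}. (if k = i then -1 else 2) * x$k)"
    by (rule sum.remove) auto
  also have "(\<Sum>k\<in>UNIV-{i}. (if k = i then -1 else 2) * x$k) = (\<Sum>k\<in>UNIV-{i}. 2 * x$k)"
    by (rule sum.cong) auto
  finally show ?thesis using True by (simp add: sum_distrib_left)
next
  case False
  have "(Smat i *v x) $ r = (\<Sum>k\<in>UNIV. Smat i $ r $ k * x$k)"
    by (simp add: matrix_vector_mult_def)
  also have "\<dots> = (\<Sum>k\<in>UNIV. (if r = k then x$k else 0))"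
    by (rule sum.cong) (auto simp: Smat_entry False)
  finally show ?thesis using False by simp
qed

lemma Smat_sq: "Smat i ** Smat i = mat 1"
  using exhaust_4[of i]
  by (auto simp: vec_eq_iff forall_4 matrix_matrix_mult_def sum_4 Smat_entry mat_def)

primrec prodS :: "4 list \<Rightarrow> real^4^4" where
  "prodS [] = mat 1"
| "prodS (i # l) = Smat i ** prodS l"

lemma prodS_append: "prodS (l1 @ l2) = prodS l1 ** prodS l2"
  by (induction l1) (simp_all add: matrix_mul_assoc)

lemma prodS_rev: "prodS (rev l) ** prodS l = mat 1"
proof (induction l)
  case Nil then show ?case by simp
next
  case (Cons i l)
  have "prodS (rev (i # l)) ** prodS (i # l) = prodS (rev l) ** ((Smat i ** Smat i) ** prodS l)"
    by (simp add: prodS_append matrix_mul_assoc)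
  also have "\<dots> = mat 1" using Cons by (simp add: Smat_sq)
  finally show ?case .
qed

lemma prodS_rev2: "prodS l ** prodS (rev l) = mat 1"
  using prodS_rev[of l] matrix_left_right_inverse by blast

lemma matrix_inv_eq: fixes A B :: "real^4^4"
  assumes "A ** B = mat 1" "B ** A = mat 1" shows "matrix_inv A = B"
  unfolding matrix_inv_def
proof (rule some_equality)
  show "A ** B = mat 1 \<and> B ** A = mat 1" using assms by simp
  fix C assume "A ** C = mat 1 \<and> C ** A = mat 1"
  then have "C = C ** (A ** B)" using assms by simp
  also have "\<dots> = (C ** A) ** B" by (simp add: matrix_mul_assoc)
  also have "\<dots> = B" using \<open>A ** C = mat 1 \<and> C ** A = mat 1\<close> by simp
  finally show "C = B" .
qed

lemma apollo_prodS: "U \<in> apollonian_group \<Longrightarrow> \<exists>l. U = prodS l"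
proof (induction rule: apollonian_group.induct)
  case one then show ?case by (intro exI[of _ "[]"]) simp
next
  case (gen i) then show ?case by (intro exI[of _ "[i]"]) simp
next
  case (mult U V)
  then obtain l1 l2 where "U = prodS l1" "V = prodS l2" by blast
  then show ?case by (intro exI[of _ "l1 @ l2"]) (simp add: prodS_append)
next
  case (inv U)
  then obtain l where "U = prodS l" by blast
  then have "matrix_inv U = prodS (rev l)" using matrix_inv_eq prodS_rev prodS_rev2 by blast
  then show ?case by blast
qed

lemma prodS_apollo: "prodS l \<in> apollonian_group"
  by (induction l) (auto intro: apollonian_group.intros)

lemma mm_row: "((A::real^4^4) ** B) $ k = (\<Sum>m\<in>UNIV. A$k$m *\<^sub>R B$m)"
  by (simp add: vec_eq_iff matrix_matrix_mult_def)

lemma d4: fixes i j k l :: 4 assumes "distinct [i,j,k,l]"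
  shows "i \<noteq> j" "i \<noteq> k" "i \<noteq> l" "j \<noteq> k" "j \<noteq> l" "k \<noteq> l"
        "j \<noteq> i" "k \<noteq> i" "l \<noteq> i" "k \<noteq> j" "l \<noteq> j" "l \<noteq> k"
  using assms by auto

lemma gram_S: assumes g: "gram W" shows "gram (Smat i ** W)"
proof -
  obtain j k l where d: "distinct [i,j,k,l]"
    using split4_ex[of i "i+1"] by (metis add_cancel_left_right one_neq_zero distinct_length_2_or_more)
  define v where "v = 2 *\<^sub>R (W$j + W$k + W$l) - W$i"
  have row: "(Smat i ** W) $ r = (if r = i then v else W$r)" for r
    unfolding Smat_mult_row split4_minus[OF d] v_def by simp
  have bv: "Bf v (W$s) = 2 * (Bf (W$j) (W$s) + Bf (W$k) (W$s) + Bf (W$l) (W$s)) - Bf (W$i) (W$s)" for s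
    unfolding v_def by (simp only: Bf_diff_left Bf_scale_left Bf_add_left)
  note dd = d4[OF d]
  have gv': "Bf (W$a) (W$b) = (if a = b then 1/2 else -1/2)" for a b using gram_val[OF g] .
  have vj: "Bf v (W$j) = -1/2" unfolding bv gv' using dd by simp
  have vk: "Bf v (W$k) = -1/2" unfolding bv gv' using dd by simp
  have vl: "Bf v (W$l) = -1/2" unfolding bv gv' using dd by simp
  have vi: "Bf v (W$i) = -7/2" unfolding bv gv' using dd by simp
  have vs: "Bf v (W$s) = -1/2" if "s \<noteq> i" for s
  proof -
    have "s = j \<or> s = k \<or> s = l" using split4_univ[OF d] that by auto
    then show ?thesis using vj vk vl by auto
  qed
  have vv: "Bf v v = 1/2"
  proof -
    have "Bf v v = 2 * (Bf v (W$j) + Bf v (W$k) + Bf v (W$l)) - Bf v (W$i)"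
      unfolding v_def by (simp only: Bf_diff_right Bf_scale_right Bf_add_right)
    then show ?thesis using vi vj vk vl by simp
  qed
  show ?thesis unfolding gram_def
  proof (intro allI)
    fix r s
    show "Bf ((Smat i ** W) $ r) ((Smat i ** W) $ s) = qd r s"
    proof (cases "r = i")
      case True
      show ?thesis
      proof (cases "s = i")
        case True
        then show ?thesis using \<open>r = i\<close> vv by (simp add: row qd_def)
      next
        case False
        then show ?thesis using \<open>r = i\<close> vs[OF False] by (simp add: row qd_def)
      qed
    next
      case False
      show ?thesis
      proof (cases "s = i")
        case True
        then show ?thesis using False vs[OF False] Bf_sym[of v] by (simp add: row qd_def)
      next
        case False
        then show ?thesis using \<open>r \<noteq> i\<close> gram_def g by (simp add: row)
      qed
    qed
  qed
qed

definition T :: "real^4 \<Rightarrow> bool" where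
  "T x \<longleftrightarrow> (\<Sum>k\<in>UNIV. x$k) > 0 \<and> (\<Sum>k\<in>UNIV. (x$k)^2) < (\<Sum>k\<in>UNIV. x$k)^2 / 2"

lemma T_aux: fixes a b c d :: real
  assumes "a+b+c+d > 0" "a^2+b^2+c^2+d^2 < (a+b+c+d)^2/2"
  shows "(2*(b+c+d) - a)+b+c+d > 0 \<and> (2*(b+c+d) - a)^2+b^2+c^2+d^2 < ((2*(b+c+d) - a)+b+c+d)^2/2"
proof
  define sm where "sm = a+b+c+d"
  have sp: "sm > 0" using assms(1) sm_def by simp
  have "0 \<le> b^2" "0 \<le> c^2" "0 \<le> d^2" by simp_all
  then have "a^2 \<le> a^2+b^2+c^2+d^2" by linarith
  then have "a^2 < sm^2/2" using assms(2) unfolding sm_def by linarith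
  moreover have "0 < sm^2" using sp by (simp add: power2_eq_square)
  moreover have "(4*a)^2 = 16*a^2" "(3 * sm)^2 = 9 * sm^2" by (simp_all add: power2_eq_square)
  ultimately have "(4*a)^2 < (3 * sm)^2" by linarith
  then have "4*a < 3 * sm" using sp power2_less_imp_less[of "4*a" "3 * sm"] by simp
  then have "4*a < 3*(a+b+c+d)" unfolding sm_def .
  then show "(2*(b+c+d) - a)+b+c+d > 0" by (simp add: algebra_simps)
  have "(2*(b+c+d) - a)^2+b^2+c^2+d^2 - ((2*(b+c+d) - a)+b+c+d)^2/2 = a^2+b^2+c^2+d^2 - (a+b+c+d)^2/2"
    by (simp add: power2_eq_square field_simps)
  then show "(2*(b+c+d) - a)^2+b^2+c^2+d^2 < ((2*(b+c+d) - a)+b+c+d)^2/2" using assms(2) by linarith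
qed

lemma T_S: assumes "T x" shows "T (Smat i *v x)"
proof -
  obtain j k l where d: "distinct [i,j,k,l]"
    using split4_ex[of i "i+1"] by (metis add_cancel_left_right one_neq_zero)
  note dd = d4[OF d]
  define y where "y = Smat i *v x"
  have c: "y $ r = (if r = i then 2 * (x$j + x$k + x$l) - x$i else x$r)" for r
    unfolding y_def Smat_mv split4_minus[OF d] by simp
  have yi: "y$i = 2 * (x$j + x$k + x$l) - x$i" using c[of i] by simp
  have yj: "y$j = x$j" using c[of j] dd by simp
  have yk: "y$k = x$k" using c[of k] dd by simp
  have yl: "y$l = x$l" using c[of l] dd by simp
  have H: "x$i+x$j+x$k+x$l > 0" "(x$i)^2+(x$j)^2+(x$k)^2+(x$l)^2 < (x$i+x$j+x$k+x$l)^2/2"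
    using assms unfolding T_def split4_sum[OF d] by simp_all
  have "(2*(x$j+x$k+x$l) - x$i)+x$j+x$k+x$l > 0 \<and>
     (2*(x$j+x$k+x$l) - x$i)^2+(x$j)^2+(x$k)^2+(x$l)^2 < ((2*(x$j+x$k+x$l) - x$i)+x$j+x$k+x$l)^2/2"
    by (rule T_aux[OF H])
  then have "T y" unfolding T_def split4_sum[OF d] yi yj yk yl .
  then show ?thesis unfolding y_def .
qed

lemma T_prodS: "T x \<Longrightarrow> T (prodS l *v x)"
proof (induction l)
  case Nil then show ?case by simp
next
  case (Cons i l)
  then show ?case using T_S by (simp flip: matrix_vector_mul_assoc)
qed

definition one4 :: "real^4" where "one4 = (\<chi> k. 1)"

lemma T_one: "T one4" by (simp add: T_def one4_def sum_4)
lemma not_T_neg_one: "\<not> T (- one4)" by (simp add: T_def one4_def sum_4)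

lemma prodS_int: "\<exists>M::4\<Rightarrow>4\<Rightarrow>int. (\<forall>r c. prodS l $ r $ c = of_int (M r c)) \<and>
    (\<forall>r c. even (M r c - (if r = c then 1 else 0)))"
proof (induction l)
  case Nil
  show ?case by (intro exI[of _ "\<lambda>r c. if r = c then 1 else 0"]) (simp add: mat_def)
next
  case (Cons i l)
  then obtain M where M: "\<forall>r c. prodS l $ r $ c = of_int (M r c)"
    and E: "\<forall>r c. even (M r c - (if r = c then 1 else 0))" by blast
  define Si :: "4 \<Rightarrow> 4 \<Rightarrow> int" where
    "Si r k = (if r = i then (if k = i then -1 else 2) else (if r = k then 1 else 0))" for r k
  have SiE: "even (Si r k - (if r = k then 1 else 0))" for r k by (simp add: Si_def)
  have Sm: "Smat i $ r $ k = of_int (Si r k)" for r k by (simp add: Smat_entry Si_def)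
  define M' where "M' r c = (\<Sum>k\<in>UNIV. Si r k * M k c)" for r c
  have e1: "prodS (i # l) $ r $ c = of_int (M' r c)" for r c
    by (simp add: matrix_matrix_mult_def M'_def Sm M)
  have e2: "even (M' r c - (if r = c then 1 else 0))" for r c
  proof -
    have "(\<Sum>k\<in>UNIV. (if r = k then 1 else 0) * (if k = c then 1 else 0) :: int)
        = (\<Sum>k\<in>UNIV. if k = r then (if r = c then 1 else 0) else 0)"
      by (rule sum.cong) auto
    also have "\<dots> = (if r = c then 1 else 0)" by simp
    finally have d: "(\<Sum>k\<in>UNIV. (if r = k then 1 else 0) * (if k = c then 1 else 0) :: int) = (if r = c then 1 else 0)" .
    have "M' r c - (if r = c then 1 else 0) =
      (\<Sum>k\<in>UNIV. (Si r k - (if r = k then 1 else 0)) * M k c + (if r = k then 1 else 0) * (M k c - (if k = c then 1 else 0)))"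
      unfolding M'_def d[symmetric] by (simp add: sum_subtractf[symmetric] algebra_simps)
    also have "even \<dots>"
      by (intro dvd_sum dvd_add) (use SiE E in auto)
    finally show ?thesis .
  qed
  show ?case using e1 e2 by blast
qed

lemma sum_delta_scale: "(\<Sum>m\<in>UNIV. (if m = p then s else 0) *\<^sub>R (W::real^4^4) $ m) = s *\<^sub>R W $ p"
proof -
  have "(\<Sum>m\<in>UNIV. (if m = p then s else 0) *\<^sub>R W $ m) = (\<Sum>m\<in>UNIV. if m = p then s *\<^sub>R W $ m else 0)"
    by (rule sum.cong) auto
  then show ?thesis by simp
qed

lemma rigid: assumes g: "gram W" and s: "s = 1 \<or> s = -1"
    and e: "\<And>k. (prodS l ** W) $ k = s *\<^sub>R W $ (\<pi> k)"
  shows "s = 1 \<and> (\<forall>k. \<pi> k = k)"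
proof -
  define U where "U = prodS l"
  have ent: "U $ k $ m = (if m = \<pi> k then s else 0)" for k m
  proof -
    have "(\<Sum>m\<in>UNIV. U$k$m *\<^sub>R W$m) = (\<Sum>m\<in>UNIV. (if m = \<pi> k then s else 0) *\<^sub>R W $ m)"
      using e[of k] unfolding mm_row U_def sum_delta_scale by simp
    then have "(\<Sum>m\<in>UNIV. (U$k$m - (if m = \<pi> k then s else 0)) *\<^sub>R W$m) = 0"
      by (simp add: scaleR_diff_left sum_subtractf)
    then show ?thesis using indep[OF g, of "\<lambda>m. U$k$m - (if m = \<pi> k then s else 0)"] by simp
  qed
  obtain M where M: "\<forall>r c. U $ r $ c = of_int (M r c)" and E: "\<forall>r c. even (M r c - (if r = c then 1 else 0))"
    using prodS_int[of l] U_def by blast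
  have pk: "\<pi> k = k" for k
  proof (rule ccontr)
    assume "\<pi> k \<noteq> k"
    then have "U $ k $ k = 0" using ent by simp
    then have "M k k = 0" using M by simp
    then show False using E[rule_format, of k k] by simp
  qed
  have "U = s *\<^sub>R mat 1" using ent pk by (simp add: vec_eq_iff mat_def)
  have "s = 1"
  proof (rule ccontr)
    assume "s \<noteq> 1"
    then have "s = -1" using s by simp
    then have "U *v one4 = - one4" using \<open>U = s *\<^sub>R mat 1\<close>
      by (simp add: vec_eq_iff matrix_vector_mult_def one4_def mat_def sum_negf)
    then show False using T_prodS[OF T_one, of l] not_T_neg_one U_def by simp
  qed
  then show ?thesis using pk by simp
qed


lemma Wmat_inj: assumes "\<And>k. valid_oc (X k)" "\<And>k. valid_oc (Y k)" "Wmat X = Wmat Y"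
  shows "X = Y"
proof
  fix k
  have "wcoord (X k) = wcoord (Y k)" using arg_cong[OF assms(3), of "\<lambda>W. W $ k"] by simp
  then show "X k = Y k" using winj assms(1,2) by blast
qed

lemma S_vals: assumes g: "gram W"
  shows "Bf ((Smat i ** W) $ i) (W$i) = -7/2" "s \<noteq> i \<Longrightarrow> Bf ((Smat i ** W) $ i) (W$s) = -1/2"
proof -
  obtain j k l where d: "distinct [i,j,k,l]"
    using split4_ex[of i "i+1"] by (metis add_cancel_left_right one_neq_zero)
  define v where "v = 2 *\<^sub>R (W$j + W$k + W$l) - W$i"
  have row: "(Smat i ** W) $ i = v"
    unfolding Smat_mult_row split4_minus[OF d] v_def by simp
  have bv: "Bf v (W$s) = 2 * (Bf (W$j) (W$s) + Bf (W$k) (W$s) + Bf (W$l) (W$s)) - Bf (W$i) (W$s)" for s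
    unfolding v_def by (simp only: Bf_diff_left Bf_scale_left Bf_add_left)
  note dd = d4[OF d]
  have gv': "Bf (W$a) (W$b) = (if a = b then 1/2 else -1/2)" for a b using gram_val[OF g] .
  have vj: "Bf v (W$j) = -1/2" unfolding bv gv' using dd by simp
  have vk: "Bf v (W$k) = -1/2" unfolding bv gv' using dd by simp
  have vl: "Bf v (W$l) = -1/2" unfolding bv gv' using dd by simp
  show "Bf ((Smat i ** W) $ i) (W$i) = -7/2" unfolding row bv gv' using dd by simp
  assume "s \<noteq> i"
  then have "s = j \<or> s = k \<or> s = l" using split4_univ[OF d] by auto
  then show "Bf ((Smat i ** W) $ i) (W$s) = -1/2" unfolding row using vj vk vl by auto
qed

lemma Smat_other_row: "r \<noteq> i \<Longrightarrow> (Smat i ** M) $ r = M $ r"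
  by (simp add: Smat_mult_row)

lemma replace_W: assumes R: "replaces i D1 D2" shows "Wmat D2 = Smat i ** Wmat D1"
proof -
  have od1: "oriented_descartes D1" and od2: "oriented_descartes D2"
    and same: "\<And>j. j \<noteq> i \<Longrightarrow> D2 j = D1 j" and sn: "supp (D2 i) \<noteq> supp (D1 i)"
    using R by (auto simp: replaces_def)
  define W1 where "W1 = Wmat D1"
  define w' where "w' = wcoord (D2 i)"
  have g1: "gram W1" using gram_of_od[OF od1] W1_def by simp
  have g2: "gram (Wmat D2)" using gram_of_od[OF od2] .
  obtain j k l where d: "distinct [i,j,k,l]"
    using split4_ex[of i "i+1"] by (metis add_cancel_left_right one_neq_zero)
  note dd = d4[OF d]
  have gm: "gv W1 w' m = -1/2" if "m \<noteq> i" for m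
  proof -
    have "gv W1 w' m = Bf (wcoord (D2 m)) (wcoord (D2 i))"
      using same[OF that] by (simp add: gv_def W1_def w'_def)
    also have "\<dots> = -1/2" using gram_val[OF g2, of m i] that by simp
    finally show ?thesis .
  qed
  define x where "x = gv W1 w' i"
  have S: "gs W1 w' = x - 3/2" unfolding gs_def split4_sum[OF d] x_def using gm dd by simp
  have "Bf w' w' = 1/2" using gram_val[OF g2, of i i] by (simp add: w'_def)
  then have "1/2 = x^2 + 3/4 - (1/2) * (x - 3/2)^2"
    using Bf_coord[OF g1, of w' w'] unfolding split4_sum[OF d] S using gm dd
    by (simp add: x_def power2_eq_square)
  then have "(2*x - 1) * (2*x + 7) = 0" by (simp add: power2_eq_square algebra_simps)
  then have x: "x = 1/2 \<or> x = -7/2" by auto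
  have co: "w' = (\<Sum>m\<in>UNIV. (gv W1 w' m - (1/2) * gs W1 w') *\<^sub>R W1$m)" by (rule coord[OF g1])
  also have "\<dots> = (x - (1/2) * (x - 3/2)) *\<^sub>R W1$i + (-1/2 - (1/2) * (x - 3/2)) *\<^sub>R (W1$j + W1$k + W1$l)"
    unfolding split4_sum[OF d] S using gm dd by (simp add: x_def scaleR_add_right)
  finally have w'x: "w' = (x - (1/2) * (x - 3/2)) *\<^sub>R W1$i + (-1/2 - (1/2) * (x - 3/2)) *\<^sub>R (W1$j + W1$k + W1$l)" .
  have "x \<noteq> 1/2"
  proof
    assume x12: "x = 1/2"
    have "w' = W1$i" using w'x unfolding x12 by simp
    then have "wcoord (D2 i) = wcoord (D1 i)" by (simp add: w'_def W1_def)
    then have "D2 i = D1 i" using winj od_valid[OF od1] od_valid[OF od2] by blast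
    then show False using sn by simp
  qed
  then have x72: "x = -7/2" using x by simp
  have "w' = 2 *\<^sub>R (W1$j + W1$k + W1$l) - W1$i" using w'x unfolding x72 by (simp add: algebra_simps)
  also have "\<dots> = (Smat i ** W1) $ i" unfolding Smat_mult_row split4_minus[OF d] by simp
  finally have wi: "wcoord (D2 i) = (Smat i ** W1) $ i" by (simp add: w'_def)
  show ?thesis
  proof (rule vec_eq_iff[THEN iffD2], intro allI)
    fix r
    show "Wmat D2 $ r = (Smat i ** Wmat D1) $ r"
    proof (cases "r = i")
      case True then show ?thesis using wi W1_def by simp
    next
      case False then show ?thesis using same[OF False] by (simp add: Smat_other_row)
    qed
  qed
qed

lemma gs_eps_val: "gs W eps = - (\<Sum>k\<in>UNIV. W$k$2) / 4"
  by (simp add: gs_def gv_def Bf_eps sum_negf sum_divide_distrib)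

lemma replace_ex: assumes od1: "oriented_descartes D1"
  shows "\<exists>D2. replaces i D1 D2 \<and> Wmat D2 = Smat i ** Wmat D1"
proof -
  define W1 where "W1 = Wmat D1"
  have g1: "gram W1" using gram_of_od[OF od1] W1_def by simp
  have v1: "\<And>k. valid_oc (D1 k)" using od_valid[OF od1] .
  define W2 where "W2 = Smat i ** W1"
  have g2: "gram W2" using gram_S[OF g1] W2_def by simp
  define v where "v = W2 $ i"
  have "Bf v v = 1/2" using gram_val[OF g2, of i i] v_def by simp
  then obtain C where vC: "valid_oc C" and wC: "wcoord C = v" using rep by blast
  define D2 where "D2 = D1(i := C)"
  have v2: "valid_oc (D2 k)" for k using v1 vC by (simp add: D2_def)
  have WD2: "Wmat D2 = W2"
  proof (rule vec_eq_iff[THEN iffD2], intro allI)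
    fix r
    show "Wmat D2 $ r = W2 $ r"
    proof (cases "r = i")
      case True then show ?thesis using wC v_def by (simp add: D2_def)
    next
      case False then show ?thesis by (simp add: D2_def W2_def W1_def Smat_other_row)
    qed
  qed
  have od2: "oriented_descartes D2" using od_of_gram[OF v2] g2 WD2 by simp
  have vi: "Bf v (W1$i) = -7/2" and vs: "\<And>s. s \<noteq> i \<Longrightarrow> Bf v (W1$s) = -1/2"
    using S_vals[OF g1] by (simp_all add: v_def W2_def)
  obtain P where PP: "(\<forall>i j. i \<noteq> j \<longrightarrow> tangent_at (D1 i) (D1 j) (P i j)) \<and>
        (\<forall>i j k l. i \<noteq> j \<longrightarrow> k \<noteq> l \<longrightarrow> P i j = P k l \<longrightarrow> {i, j} = {k, l})"
    using od_P[OF od1] by (rule exE)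
  have gW1: "gram (Wmat D1)" using g1 W1_def by simp
  obtain j where ji: "j \<noteq> i" and nl: "\<not> (is_line (D1 i) \<and> is_line (D1 j))"
  proof (cases "is_line (D1 i)")
    case False
    obtain j where "j \<noteq> i" using split4_ex[of i "i+1"] by (metis add_cancel_left_right one_neq_zero)
    then show ?thesis using that False by blast
  next
    case True
    have "\<exists>j. W1$j$2 \<noteq> 0"
    proof (rule ccontr)
      assume "\<not> (\<exists>j. W1$j$2 \<noteq> 0)"
      then have "gs W1 eps = 0" by (simp add: gs_eps_val)
      then show False using gs_eps_ne[OF g1] by simp
    qed
    then obtain j where j: "W1$j$2 \<noteq> 0" by blast
    have "\<not> is_line (D1 j)" using is_line_B[OF v1] j W1_def by simp
    moreover have "j \<noteq> i" using True is_line_B[OF v1] j W1_def by auto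
    ultimately show ?thesis using that by blast
  qed
  have sn: "supp C \<noteq> supp (D1 i)"
  proof
    assume eq: "supp C = supp (D1 i)"
    have T: "tangent_at (D1 i) (D1 j) (P i j)" using PP ji by simp
    then obtain x where x: "supp (D1 i) \<inter> supp (D1 j) = {x}" "P i j = Some x"
      using nl unfolding tangent_at_def by blast
    obtain a where a: "a \<noteq> 0" "marker (P i j) = a *\<^sub>R (Wmat D1 $ i + Wmat D1 $ j)"
      using TP[OF v1 gW1 _ T] ji by auto
    have "x \<in> supp C" using x eq by auto
    then have "Bf v (pvec x) = 0" using supp_B[OF vC] wC by simp
    moreover have "pvec x = a *\<^sub>R (W1$i + W1$j)" using a x by (simp add: marker_def W1_def)
    ultimately have "a * (Bf v (W1$i) + Bf v (W1$j)) = 0" by (simp add: Bf_scale_right Bf_add_right)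
    then show False using vi vs[OF ji] a(1) by simp
  qed
  have newpts: "p \<noteq> q" if ji: "j \<noteq> i" and T1: "tangent_at (D1 i) (D1 j) p"
    and T2: "tangent_at (D2 i) (D1 j) q" for j p q
  proof
    assume pq: "p = q"
    obtain a where a: "a \<noteq> 0" "marker p = a *\<^sub>R (W1$i + W1$j)"
      using TP[OF v1 gW1 _ T1] ji W1_def by auto
    have T2': "tangent_at (D2 i) (D2 j) q" using T2 ji by (simp add: D2_def)
    have gD2: "gram (Wmat D2)" using g2 WD2 by simp
    obtain b where b: "b \<noteq> 0" "marker q = b *\<^sub>R (Wmat D2 $ i + Wmat D2 $ j)"
      using TP[OF v2 gD2 _ T2'] ji by auto
    have "Wmat D2 $ i = v" "Wmat D2 $ j = W1 $ j" using WD2 v_def ji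
      by (simp_all add: W2_def Smat_other_row)
    then have e: "a *\<^sub>R (W1$i + W1$j) = b *\<^sub>R (v + W1$j)" using a b pq by simp
    have "Bf (W1$i) (a *\<^sub>R (W1$i + W1$j)) = Bf (W1$i) (b *\<^sub>R (v + W1$j))" using e by simp
    then have "a * (1/2 + -1/2) = b * (-7/2 + -1/2)"
      using gram_val[OF g1, of i i] gram_val[OF g1, of i j] ji vi Bf_sym[of v "W1$i"]
      by (simp add: Bf_scale_right Bf_add_right)
    then show False using b(1) by simp
  qed
  have "replaces i D1 D2"
    unfolding replaces_def using od1 od2 sn newpts by (auto simp: D2_def)
  then show ?thesis using WD2 W2_def W1_def by blast
qed


definition sg :: "bool \<Rightarrow> real" where "sg s = (if s then 1 else -1)"

definition act :: "bool \<Rightarrow> (4 \<Rightarrow> 4) \<Rightarrow> config \<Rightarrow> config" where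
  "act s \<pi> X = (\<lambda>k. if s then X (\<pi> k) else orev (X (\<pi> k)))"

lemma Wmat_act: "Wmat (act s \<pi> X) $ k = sg s *\<^sub>R Wmat X $ (\<pi> k)"
  by (simp add: act_def sg_def wcoord_orev)

lemma valid_act: "(\<And>k. valid_oc (X k)) \<Longrightarrow> valid_oc (act s \<pi> X k)"
  by (simp add: act_def)

lemma sg_sq: "sg s * sg s = 1" by (simp add: sg_def)

lemma gram_act: assumes g: "gram (Wmat X)" and i: "inj \<pi>" shows "gram (Wmat (act s \<pi> X))"
proof -
  have "Bf (Wmat (act s \<pi> X) $ j) (Wmat (act s \<pi> X) $ k) = qd j k" for j k
  proof -
    have "Bf (Wmat (act s \<pi> X) $ j) (Wmat (act s \<pi> X) $ k) = (sg s * sg s) * qd (\<pi> j) (\<pi> k)"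
      unfolding Wmat_act using g by (simp add: Bf_scale_left Bf_scale_right gram_def)
    also have "\<dots> = qd j k" using i by (simp add: sg_sq qd_def inj_eq)
    finally show ?thesis .
  qed
  then show ?thesis by (simp add: gram_def)
qed

lemma od_act: assumes od: "oriented_descartes X" and i: "inj \<pi>" shows "oriented_descartes (act s \<pi> X)"
proof -
  have v: "valid_oc (act s \<pi> X k)" for k by (rule valid_act[OF od_valid[OF od]])
  show ?thesis using od_of_gram[OF v gram_act[OF gram_of_od[OF od] i]] .
qed

lemma underlying_act: assumes "surj \<pi>" shows "underlying (act s \<pi> X) = underlying X"
proof -
  have "supp \<circ> act s \<pi> X = (supp \<circ> X) \<circ> \<pi>" by (auto simp: act_def fun_eq_iff)
  then have "underlying (act s \<pi> X) = (supp \<circ> X) ` (\<pi> ` UNIV)"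
    unfolding underlying_def by (metis image_comp)
  also have "\<dots> = underlying X" using assms by (simp add: underlying_def image_comp)
  finally show ?thesis .
qed

lemma act_id: "act True id X = X" by (simp add: act_def)

lemma actS: assumes b: "bij \<pi>" and e: "Wmat X' = Smat j ** Wmat X"
  shows "Wmat (act s \<pi> X') = Smat (inv \<pi> j) ** Wmat (act s \<pi> X)"
proof (rule vec_eq_iff[THEN iffD2], intro allI)
  fix k
  define j' where "j' = inv \<pi> j"
  have inj: "inj \<pi>" and sj: "surj \<pi>" using b by (simp_all add: bij_def)
  have pj: "\<pi> j' = j" unfolding j'_def using sj by (rule surj_f_inv_f)
  have "\<pi> k = \<pi> j' \<longleftrightarrow> k = j'" using inj by (rule inj_eq)
  then have iff: "\<pi> k = j \<longleftrightarrow> k = j'" unfolding pj .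
  have img: "\<pi> ` (UNIV - {j'}) = UNIV - {j}"
  proof -
    have "\<pi> ` (UNIV - {j'}) = \<pi> ` UNIV - \<pi> ` {j'}" using inj by (rule image_set_diff)
    moreover have "\<pi> ` UNIV = UNIV" using sj by simp
    ultimately show ?thesis using pj by simp
  qed
  have io: "inj_on \<pi> (UNIV - {j'})" by (rule inj_on_subset[OF inj]) simp
  have sum: "(\<Sum>m\<in>UNIV-{j'}. Wmat X $ (\<pi> m)) = (\<Sum>m\<in>UNIV-{j}. Wmat X $ m)"
  proof -
    have "(\<Sum>m\<in>\<pi> ` (UNIV-{j'}). Wmat X $ m) = (\<Sum>m\<in>UNIV-{j'}. Wmat X $ (\<pi> m))"
      using sum.reindex[OF io, of "\<lambda>m. Wmat X $ m"] by (simp add: comp_def)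
    then show ?thesis unfolding img by simp
  qed
  have L: "Wmat (act s \<pi> X') $ k = sg s *\<^sub>R (if \<pi> k = j then 2 *\<^sub>R (\<Sum>m\<in>UNIV-{j}. Wmat X $ m) - Wmat X $ j else Wmat X $ (\<pi> k))"
    unfolding Wmat_act e Smat_mult_row ..
  have R: "(Smat (inv \<pi> j) ** Wmat (act s \<pi> X)) $ k = (if k = j' then 2 *\<^sub>R (\<Sum>m\<in>UNIV-{j'}. sg s *\<^sub>R Wmat X $ (\<pi> m)) - sg s *\<^sub>R Wmat X $ (\<pi> j') else sg s *\<^sub>R Wmat X $ (\<pi> k))"
    unfolding Smat_mult_row j'_def[symmetric] Wmat_act ..
  show "Wmat (act s \<pi> X') $ k = (Smat (inv \<pi> j) ** Wmat (act s \<pi> X)) $ k"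
  proof (cases "k = j'")
    case True
    have s1: "(\<Sum>m\<in>UNIV-{j'}. sg s *\<^sub>R Wmat X $ (\<pi> m)) = sg s *\<^sub>R (\<Sum>m\<in>UNIV-{j}. Wmat X $ m)"
      unfolding sum[symmetric] by (rule scaleR_sum_right[symmetric])
    have s2: "sg s *\<^sub>R (2 *\<^sub>R (\<Sum>m\<in>UNIV-{j}. Wmat X $ m) - Wmat X $ j)
        = 2 *\<^sub>R (sg s *\<^sub>R (\<Sum>m\<in>UNIV-{j}. Wmat X $ m)) - sg s *\<^sub>R Wmat X $ j"
      by (simp add: scaleR_right_diff_distrib)
    have "\<pi> k = j" using True iff by simp
    then show ?thesis unfolding L R using True pj s1 s2 by simp
  next
    case False
    then have "\<pi> k \<noteq> j" using iff by simp
    then show ?thesis unfolding L R using False by simp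
  qed
qed

lemma FO_self: "D \<in> F_orbit D" by (simp add: F_orbit_def)

lemma FO_step: "X \<in> F_orbit D \<Longrightarrow> replaces i X Y \<Longrightarrow> Y \<in> F_orbit D"
  unfolding F_orbit_def replacement_step_def by (auto intro: rtranclp.rtrancl_into_rtrancl)

lemma FO_od: assumes od: "oriented_descartes D" and X: "X \<in> F_orbit D"
  shows "oriented_descartes X \<and> (\<exists>l. Wmat X = prodS l ** Wmat D)"
proof -
  have "replacement_step\<^sup>*\<^sup>* D X" using X by (simp add: F_orbit_def)
  then show ?thesis
  proof (induction rule: rtranclp_induct)
    case base
    then show ?case using od by (intro conjI exI[of _ "[]"]) simp_all
  next
    case (step Y Z)
    then obtain i where R: "replaces i Y Z" by (auto simp: replacement_step_def)
    obtain l where l: "Wmat Y = prodS l ** Wmat D" using step by blast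
    have "Wmat Z = prodS (i # l) ** Wmat D" using replace_W[OF R] l by (simp add: matrix_mul_assoc)
    moreover have "oriented_descartes Z" using R by (simp add: replaces_def)
    ultimately show ?case by blast
  qed
qed

lemma FO2: assumes od: "oriented_descartes D" and X: "X \<in> F_orbit D" and b: "bij \<pi>"
  shows "\<exists>Y\<in>F_orbit D. Wmat (act s \<pi> Y) = prodS l ** Wmat (act s \<pi> X)"
proof (induction l)
  case Nil then show ?case using X by auto
next
  case (Cons i l)
  then obtain Y where Y: "Y \<in> F_orbit D" and e: "Wmat (act s \<pi> Y) = prodS l ** Wmat (act s \<pi> X)" by blast
  have odY: "oriented_descartes Y" using FO_od[OF od Y] by blast
  obtain Y' where R: "replaces (\<pi> i) Y Y'" and e': "Wmat Y' = Smat (\<pi> i) ** Wmat Y"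
    using replace_ex[OF odY] by blast
  have "inv \<pi> (\<pi> i) = i" using b by (simp add: bij_def inv_f_f)
  then have "Wmat (act s \<pi> Y') = Smat i ** Wmat (act s \<pi> Y)" using actS[OF b e'] by simp
  also have "\<dots> = prodS (i # l) ** Wmat (act s \<pi> X)" using e by (simp add: matrix_mul_assoc)
  finally show ?case using FO_step[OF Y R] by blast
qed

lemma FO3: assumes od: "oriented_descartes D" and X: "X \<in> F_orbit D" and b: "bij \<pi>"
  shows "\<exists>l. Wmat (act s \<pi> X) = prodS l ** Wmat (act s \<pi> D)"
proof -
  have "replacement_step\<^sup>*\<^sup>* D X" using X by (simp add: F_orbit_def)
  then show ?thesis
  proof (induction rule: rtranclp_induct)
    case base
    then show ?case by (intro exI[of _ "[]"]) simp
  next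
    case (step Y Z)
    then obtain i where R: "replaces i Y Z" by (auto simp: replacement_step_def)
    obtain l where l: "Wmat (act s \<pi> Y) = prodS l ** Wmat (act s \<pi> D)" using step by blast
    have "Wmat (act s \<pi> Z) = Smat (inv \<pi> i) ** Wmat (act s \<pi> Y)" using actS[OF b replace_W[OF R]] .
    also have "\<dots> = prodS (inv \<pi> i # l) ** Wmat (act s \<pi> D)" using l by (simp add: matrix_mul_assoc)
    finally show ?case by blast
  qed
qed

lemma supp_inj: assumes od: "oriented_descartes Y" and e: "supp (Y i) = supp (Y j)" shows "i = j"
proof (rule ccontr)
  assume ij: "i \<noteq> j"
  have g: "gram (Wmat Y)" using gram_of_od[OF od] .
  obtain k l where d: "distinct [i,j,k,l]" using split4_ex[OF ij] by blast
  note dd = d4[OF d]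
  have "Y j = Y i \<or> Y j = orev (Y i)" using supp_eq[OF od_valid[OF od] od_valid[OF od] e] .
  then show False
  proof
    assume "Y j = Y i"
    then show False using gram_val[OF g, of i j] gram_val[OF g, of i i] ij by simp
  next
    assume "Y j = orev (Y i)"
    then have "wcoord (Y j) = - wcoord (Y i)" by (simp add: wcoord_orev)
    then show False using gram_val[OF g, of k j] gram_val[OF g, of k i] dd by (simp add: Bf_neg_right)
  qed
qed

lemma sigperm: assumes oX: "oriented_descartes X" and oY: "oriented_descartes Y"
    and u: "underlying X = underlying Y"
  shows "\<exists>s \<pi>. bij \<pi> \<and> X = act s \<pi> Y"
proof -
  have ex: "\<exists>m. supp (X k) = supp (Y m)" for k
  proof -
    have E: "supp ` range X = supp ` range Y" using u by (simp add: underlying_def)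
    have "supp (X k) \<in> supp ` range Y" unfolding E[symmetric] by simp
    then show ?thesis by (auto simp: image_iff)
  qed
  define \<pi> where "\<pi> k = (SOME m. supp (X k) = supp (Y m))" for k
  have pk: "supp (X k) = supp (Y (\<pi> k))" for k unfolding \<pi>_def using someI_ex[OF ex] .
  have inj: "inj \<pi>"
  proof (rule injI)
    fix a b assume "\<pi> a = \<pi> b"
    then have "supp (X a) = supp (X b)" using pk by metis
    then show "a = b" using supp_inj[OF oX] by blast
  qed
  have b: "bij \<pi>" using inj finite_UNIV_inj_surj[of \<pi>] by (simp add: bij_def)
  have alt: "X k = Y (\<pi> k) \<or> X k = orev (Y (\<pi> k))" for k
    using supp_eq[OF od_valid[OF oY] od_valid[OF oX] pk[symmetric]] .
  have ne: "orev (Y m) \<noteq> Y m" for m using orev_ne[OF od_valid[OF oY]] .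
  define s where "s = (X 1 = Y (\<pi> 1))"
  have gX: "gram (Wmat X)" using gram_of_od[OF oX] .
  have gY: "gram (Wmat Y)" using gram_of_od[OF oY] .
  have "X k = (if s then Y (\<pi> k) else orev (Y (\<pi> k)))" for k
  proof (cases "k = 1")
    case True then show ?thesis using alt[of 1] s_def by auto
  next
    case False
    have pne: "\<pi> 1 \<noteq> \<pi> k" using False inj by (metis inj_eq)
    have v: "Bf (wcoord (X 1)) (wcoord (X k)) = -1/2" using gram_val[OF gX, of 1 k] False by simp
    have w: "Bf (wcoord (Y (\<pi> 1))) (wcoord (Y (\<pi> k))) = -1/2" using gram_val[OF gY, of "\<pi> 1" "\<pi> k"] pne by simp
    show ?thesis
    proof (cases s)
      case True
      then have x1: "X 1 = Y (\<pi> 1)" using s_def by simp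
      show ?thesis
      proof (rule ccontr)
        assume "X k \<noteq> (if s then Y (\<pi> k) else orev (Y (\<pi> k)))"
        then have "X k = orev (Y (\<pi> k))" using alt[of k] True by auto
        then show False using v w x1 by (simp add: wcoord_orev Bf_neg_right)
      qed
    next
      case False
      then have x1: "X 1 = orev (Y (\<pi> 1))" using s_def alt[of 1] by auto
      show ?thesis
      proof (rule ccontr)
        assume "X k \<noteq> (if s then Y (\<pi> k) else orev (Y (\<pi> k)))"
        then have "X k = Y (\<pi> k)" using alt[of k] False by auto
        then show False using v w x1 by (simp add: wcoord_orev Bf_neg_left)
      qed
    qed
  qed
  then have "X = act s \<pi> Y" by (simp add: act_def fun_eq_iff)
  then show ?thesis using b by blast
qed

lemma rigid_conf: assumes od: "oriented_descartes Y" and e: "Wmat (act s \<pi> Y) = prodS l ** Wmat Y"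
  shows "s \<and> \<pi> = id"
proof -
  have "sg s = 1 \<or> sg s = -1" by (simp add: sg_def)
  moreover have "(prodS l ** Wmat Y) $ k = sg s *\<^sub>R Wmat Y $ (\<pi> k)" for k using e Wmat_act by metis
  ultimately have "sg s = 1 \<and> (\<forall>k. \<pi> k = k)" using rigid[OF gram_of_od[OF od]] by blast
  then show ?thesis by (auto simp: sg_def fun_eq_iff split: if_splits)
qed

lemma act_inj: assumes od: "oriented_descartes D" and e: "act s \<pi> D = act s' \<pi>' D"
  shows "s = s' \<and> \<pi> = \<pi>'"
proof -
  have ek: "act s \<pi> D k = act s' \<pi>' D k" for k using e by simp
  have sa: "supp (act s \<pi> D k) = supp (D (\<pi> k))" "supp (act s' \<pi>' D k) = supp (D (\<pi>' k))" for k
    by (simp_all add: act_def)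
  have "supp (D (\<pi> k)) = supp (D (\<pi>' k))" for k using ek[of k] sa[of k] by metis
  then have pp: "\<pi> k = \<pi>' k" for k using supp_inj[OF od] by blast
  have ne: "orev (D m) \<noteq> D m" for m using orev_ne[OF od_valid[OF od]] .
  have "s = s'" using ek[of 1] pp[of 1] ne[of "\<pi>' 1"] by (auto simp: act_def split: if_splits)
  then show ?thesis using pp by auto
qed

lemma prodS_cancel: "Wmat Y = prodS l ** W \<Longrightarrow> W = prodS (rev l) ** Wmat Y"
  by (simp add: matrix_mul_assoc prodS_rev)

lemma card_perms: "card {\<pi> :: 4 \<Rightarrow> 4. bij \<pi>} = 24"
proof -
  have "{\<pi> :: 4 \<Rightarrow> 4. bij \<pi>} = {p. p permutes UNIV}" by (simp add: permutes_univ bij_iff)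
  moreover have "card {p :: 4 \<Rightarrow> 4. p permutes UNIV} = fact 4"
    by (rule card_permutations) simp_all
  ultimately show ?thesis by (simp add: fact_numeral)
qed

theorem theorem4p3:
  fixes D :: config
  assumes "positively_oriented D"
  shows "(\<forall>D1 \<in> DD D. \<forall>U \<in> apollonian_group. \<exists>D2 \<in> DD D. Wmat D2 = U ** Wmat D1)
       \<and> card (A_orbit ` DD D) = 48
       \<and> \<Union> (A_orbit ` DD D) = DD D
       \<and> (\<forall>Orb \<in> A_orbit ` DD D. \<forall>X \<in> underlying ` F_orbit D. \<exists>!D2 \<in> Orb. underlying D2 = X)"
proof -
  have odD: "oriented_descartes D" using assms
    by (simp add: positively_oriented_def oriented_descartes_def)
  define F where "F = F_orbit D"
  define Ob where "Ob s \<pi> = act s \<pi> ` F" for s \<pi>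
  define Perms where "Perms = {\<pi> :: 4 \<Rightarrow> 4. bij \<pi>}"
  have Fod: "oriented_descartes X" if "X \<in> F" for X using FO_od[OF odD] that F_def by blast
  have FW: "\<exists>l. Wmat X = prodS l ** Wmat D" if "X \<in> F" for X using FO_od[OF odD] that F_def by blast
  have DF: "D \<in> F" using FO_self F_def by simp
  have bij_inj: "inj \<pi>" "surj \<pi>" if "bij \<pi>" for \<pi> :: "4 \<Rightarrow> 4" using that by (simp_all add: bij_def)
  have DDc: "X \<in> DD D \<longleftrightarrow> (\<exists>s \<pi> Y. bij \<pi> \<and> Y \<in> F \<and> X = act s \<pi> Y)" for X
  proof
    assume "X \<in> DD D"
    then obtain Y where oX: "oriented_descartes X" and Y: "Y \<in> F" and u: "underlying X = underlying Y"
      by (auto simp: DD_def F_def)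
    then obtain s \<pi> where "bij \<pi>" "X = act s \<pi> Y" using sigperm[OF oX Fod[OF Y] u] by blast
    then show "\<exists>s \<pi> Y. bij \<pi> \<and> Y \<in> F \<and> X = act s \<pi> Y" using Y by blast
  next
    assume "\<exists>s \<pi> Y. bij \<pi> \<and> Y \<in> F \<and> X = act s \<pi> Y"
    then obtain s \<pi> Y where b: "bij \<pi>" and Y: "Y \<in> F" and X: "X = act s \<pi> Y" by blast
    have "oriented_descartes X" using od_act[OF Fod[OF Y] bij_inj(1)[OF b]] X by simp
    moreover have "underlying X = underlying Y" using underlying_act[OF bij_inj(2)[OF b]] X by simp
    ultimately show "X \<in> DD D" using Y by (auto simp: DD_def F_def)
  qed
  have orb: "A_orbit (act s \<pi> Y) = Ob s \<pi>" if b: "bij \<pi>" and Y: "Y \<in> F" for s \<pi> Y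
  proof
    show "A_orbit (act s \<pi> Y) \<subseteq> Ob s \<pi>"
    proof
      fix Z assume "Z \<in> A_orbit (act s \<pi> Y)"
      then obtain U where oZ: "oriented_descartes Z" and U: "U \<in> apollonian_group"
        and e: "Wmat Z = U ** Wmat (act s \<pi> Y)" by (auto simp: A_orbit_def)
      obtain l where l: "U = prodS l" using apollo_prodS[OF U] by blast
      obtain Y' where Y': "Y' \<in> F" and e': "Wmat (act s \<pi> Y') = prodS l ** Wmat (act s \<pi> Y)"
        using FO2[OF odD Y[unfolded F_def] b] F_def by blast
      have "Z = act s \<pi> Y'"
        by (rule Wmat_inj[OF od_valid[OF oZ] valid_act[OF od_valid[OF Fod[OF Y']]]]) (use e e' l in simp)
      then show "Z \<in> Ob s \<pi>" using Y' by (simp add: Ob_def)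
    qed
    show "Ob s \<pi> \<subseteq> A_orbit (act s \<pi> Y)"
    proof
      fix Z assume "Z \<in> Ob s \<pi>"
      then obtain Y' where Y': "Y' \<in> F" and Z: "Z = act s \<pi> Y'" by (auto simp: Ob_def)
      obtain l1 where l1: "Wmat (act s \<pi> Y') = prodS l1 ** Wmat (act s \<pi> D)"
        using FO3[OF odD Y'[unfolded F_def] b] by blast
      obtain l2 where l2: "Wmat (act s \<pi> Y) = prodS l2 ** Wmat (act s \<pi> D)"
        using FO3[OF odD Y[unfolded F_def] b] by blast
      have "Wmat (act s \<pi> D) = prodS (rev l2) ** Wmat (act s \<pi> Y)" using prodS_cancel[OF l2] .
      then have "Wmat Z = prodS (l1 @ rev l2) ** Wmat (act s \<pi> Y)"
        using l1 Z by (simp add: prodS_append matrix_mul_assoc)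
      moreover have "oriented_descartes Z" using od_act[OF Fod[OF Y'] bij_inj(1)[OF b]] Z by simp
      ultimately show "Z \<in> A_orbit (act s \<pi> Y)" using prodS_apollo by (auto simp: A_orbit_def)
    qed
  qed
  have img: "A_orbit ` DD D = (\<lambda>(s, \<pi>). Ob s \<pi>) ` (UNIV \<times> Perms)"
  proof
    show "A_orbit ` DD D \<subseteq> (\<lambda>(s, \<pi>). Ob s \<pi>) ` (UNIV \<times> Perms)"
    proof
      fix Q assume "Q \<in> A_orbit ` DD D"
      then obtain X where X: "X \<in> DD D" and Q: "Q = A_orbit X" by blast
      obtain s \<pi> Y where b: "bij \<pi>" and Y: "Y \<in> F" and XY: "X = act s \<pi> Y" using DDc X by blast
      have "Q = Ob s \<pi>" using orb[OF b Y] Q XY by simp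
      then show "Q \<in> (\<lambda>(s, \<pi>). Ob s \<pi>) ` (UNIV \<times> Perms)" using b by (auto simp: Perms_def)
    qed
    show "(\<lambda>(s, \<pi>). Ob s \<pi>) ` (UNIV \<times> Perms) \<subseteq> A_orbit ` DD D"
    proof
      fix Q assume "Q \<in> (\<lambda>(s, \<pi>). Ob s \<pi>) ` (UNIV \<times> Perms)"
      then obtain s \<pi> where b: "bij \<pi>" and Q: "Q = Ob s \<pi>" by (auto simp: Perms_def)
      have "act s \<pi> D \<in> DD D" using DDc b DF by blast
      moreover have "A_orbit (act s \<pi> D) = Q" using orb[OF b DF] Q by simp
      ultimately show "Q \<in> A_orbit ` DD D" by blast
    qed
  qed
  have c1: "\<forall>D1 \<in> DD D. \<forall>U \<in> apollonian_group. \<exists>D2 \<in> DD D. Wmat D2 = U ** Wmat D1"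
  proof (intro ballI)
    fix D1 U assume D1: "D1 \<in> DD D" and U: "U \<in> apollonian_group"
    obtain s \<pi> Y where b: "bij \<pi>" and Y: "Y \<in> F" and XY: "D1 = act s \<pi> Y" using DDc D1 by blast
    obtain l where l: "U = prodS l" using apollo_prodS[OF U] by blast
    obtain Y' where Y': "Y' \<in> F" and e': "Wmat (act s \<pi> Y') = prodS l ** Wmat (act s \<pi> Y)"
      using FO2[OF odD Y[unfolded F_def] b] F_def by blast
    have "act s \<pi> Y' \<in> DD D" using DDc b Y' by blast
    then show "\<exists>D2 \<in> DD D. Wmat D2 = U ** Wmat D1" using e' l XY by blast
  qed
  have c3: "\<Union> (A_orbit ` DD D) = DD D"
  proof
    show "\<Union> (A_orbit ` DD D) \<subseteq> DD D"
    proof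
      fix Z assume "Z \<in> \<Union> (A_orbit ` DD D)"
      then obtain X where X: "X \<in> DD D" and Z: "Z \<in> A_orbit X" by blast
      obtain s \<pi> Y where b: "bij \<pi>" and Y: "Y \<in> F" and XY: "X = act s \<pi> Y" using DDc X by blast
      have "Z \<in> Ob s \<pi>" using orb[OF b Y] Z XY by simp
      then obtain Y' where "Y' \<in> F" "Z = act s \<pi> Y'" by (auto simp: Ob_def)
      then show "Z \<in> DD D" using DDc b by blast
    qed
    show "DD D \<subseteq> \<Union> (A_orbit ` DD D)"
    proof
      fix X assume X: "X \<in> DD D"
      obtain s \<pi> Y where b: "bij \<pi>" and Y: "Y \<in> F" and XY: "X = act s \<pi> Y" using DDc X by blast
      have "X \<in> A_orbit X" using orb[OF b Y] XY Y by (simp add: Ob_def)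
      then show "X \<in> \<Union> (A_orbit ` DD D)" using X by blast
    qed
  qed
  have uniq: "Y1 = Y2" if Y1: "Y1 \<in> F" and Y2: "Y2 \<in> F" and u: "underlying Y1 = underlying Y2" for Y1 Y2
  proof -
    obtain s' \<pi>' where b': "bij \<pi>'" and e: "Y2 = act s' \<pi>' Y1"
      using sigperm[OF Fod[OF Y2] Fod[OF Y1] u[symmetric]] by blast
    obtain l1 where l1: "Wmat Y1 = prodS l1 ** Wmat D" using FW[OF Y1] by blast
    obtain l2 where l2: "Wmat Y2 = prodS l2 ** Wmat D" using FW[OF Y2] by blast
    have "Wmat D = prodS (rev l1) ** Wmat Y1" using prodS_cancel[OF l1] .
    then have "Wmat (act s' \<pi>' Y1) = prodS (l2 @ rev l1) ** Wmat Y1"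
      using l2 e by (simp add: prodS_append matrix_mul_assoc)
    then have "s' \<and> \<pi>' = id" using rigid_conf[OF Fod[OF Y1]] by blast
    then show ?thesis using e act_id by simp
  qed
  have c4: "\<forall>Orb \<in> A_orbit ` DD D. \<forall>X \<in> underlying ` F_orbit D. \<exists>!D2 \<in> Orb. underlying D2 = X"
  proof (intro ballI)
    fix Orb X assume Q: "Orb \<in> A_orbit ` DD D" and X: "X \<in> underlying ` F_orbit D"
    obtain s \<pi> where b: "bij \<pi>" and Ob: "Orb = Ob s \<pi>" using Q img by (auto simp: Perms_def)
    obtain Y0 where Y0: "Y0 \<in> F" and XY: "X = underlying Y0" using X F_def by blast
    show "\<exists>!D2 \<in> Orb. underlying D2 = X"
    proof (rule ex1I)
      show "act s \<pi> Y0 \<in> Orb \<and> underlying (act s \<pi> Y0) = X"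
        using Ob Y0 XY underlying_act[OF bij_inj(2)[OF b]] by (simp add: Ob_def)
      fix Z assume Z: "Z \<in> Orb \<and> underlying Z = X"
      then obtain Y where Y: "Y \<in> F" and ZY: "Z = act s \<pi> Y" using Ob by (auto simp: Ob_def)
      have "underlying Y = underlying Y0"
        using Z ZY XY underlying_act[OF bij_inj(2)[OF b]] by simp
      then have "Y = Y0" using uniq[OF Y Y0] by simp
      then show "Z = act s \<pi> Y0" using ZY by simp
    qed
  qed
  have injO: "inj_on (\<lambda>(s, \<pi>). Ob s \<pi>) (UNIV \<times> Perms)"
  proof (rule inj_onI, clarsimp)
    fix s \<pi> s' \<pi>' assume b: "\<pi> \<in> Perms" and b': "\<pi>' \<in> Perms" and e: "Ob s \<pi> = Ob s' \<pi>'"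
    have "act s \<pi> D \<in> Ob s' \<pi>'" using e DF by (auto simp: Ob_def)
    then obtain Y where Y: "Y \<in> F" and eY: "act s \<pi> D = act s' \<pi>' Y" by (auto simp: Ob_def)
    have "underlying Y = underlying D"
      using eY underlying_act[OF bij_inj(2)] b b' by (metis Perms_def mem_Collect_eq)
    then have "Y = D" using uniq[OF Y DF] by simp
    then show "s = s' \<and> \<pi> = \<pi>'" using act_inj[OF odD] eY by simp
  qed
  have "card (A_orbit ` DD D) = card ((UNIV :: bool set) \<times> Perms)" using card_image[OF injO] img by simp
  also have "\<dots> = 48" using card_perms by (simp add: Perms_def card_cartesian_product)
  finally have c2: "card (A_orbit ` DD D) = 48" .
  show ?thesis using c1 c2 c3 c4 by blast
qed


end
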